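(* The following problem is decidable: given a finite alphabet $\mathcal{A}$, a finite set $\mathcal{F}$ of finite patterns on $\mathbb{Z}^d$, and $T\in\mathbb{N}$, does player $A$ have a strategy to win the game $\Gamma(\mathcal{A},\mathcal{F},\mathbb{Z}^d)$ in $T$ moves or less (i.e. is the game value of $\Gamma(\mathcal{A},\mathcal{F},\mathbb{Z}^d)$ at most $T$)?
   Context: Fix $d\ge 1$. A pattern is $p=(S,f)$ with $S\subseteq\mathbb{Z}^d$ and $f\in\mathcal{A}^S$. A finite pattern $q=(S',g)$ appears in $p=(S,f)$ if there is $v\in\mathbb{Z}^d$ with $v+S'\subseteq S$ and $f(v+j)=g(j)$ for all $j\in S'$. The Domino game $\Gamma(\mathcal{A},\mathcal{F},E)$ for $E\subseteq\mathbb{Z}^d$: players $A$ and $B$ alternate turns, $A$ first, starting from the empty pattern; on a turn the current player passes or colours one uncoloured cell of $E$ with a colour of $\mathcal{A}$. A position $(p,\rho)$ is final if a pattern of $\mathcal{F}$ appears in $p$, and then $A$ wins; $B$ wins if no final position occurs. Values are defined inductively: a final position has value $0$; a position with $A$ to move that has a move to a position winning for $A$ is winning for $A$ with value $1+\min$ of the values of such successors; a position with $B$ to move all of whose successors are winning for $A$ is winning for $A$ with value $1+\sup$ of the successor values. "$A$ wins in $T$ moves or less" means the initial position (empty pattern, $A$ to move) is winning for $A$ with value $\le T$, i.e. $A$ has a strategy guaranteeing a final position within $T$ turns (turns of both players counted). *)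

theory Defs
  imports Main "HOL-Library.Nat_Bijection"
begin

datatype recf = Zero | Succ | Proj nat | Comp recf "recf list" | Prec recf recf | Mn recf

inductive eval :: "recf \<Rightarrow> nat list \<Rightarrow> nat \<Rightarrow> bool" where
  zero: "eval Zero xs 0"
| succ: "eval Succ (x # xs) (Suc x)"
| proj: "i < length xs \<Longrightarrow> eval (Proj i) xs (xs ! i)"
| comp: "list_all2 (\<lambda>g y. eval g xs y) gs ys \<Longrightarrow> eval f ys z \<Longrightarrow> eval (Comp f gs) xs z"
| prec0: "eval f xs y \<Longrightarrow> eval (Prec f g) (0 # xs) y"
| precS: "eval (Prec f g) (n # xs) y \<Longrightarrow> eval g (n # y # xs) z \<Longrightarrow> eval (Prec f g) (Suc n # xs) z"
| mn: "eval f (n # xs) 0 \<Longrightarrow> (\<forall>m<n. \<exists>y. eval f (m # xs) y \<and> 0 < y) \<Longrightarrow> eval (Mn f) xs n"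

definition decidable :: "(nat \<Rightarrow> bool) \<Rightarrow> bool" where
  "decidable P \<longleftrightarrow> (\<exists>f. \<forall>n. eval f [n] (if P n then 1 else 0))"

text \<open>Cells of Z^d are integer lists of length d; colours are natural numbers; the alphabet is
given as a list of colours.\<close>

type_synonym cell = "int list"
type_synonym fpattern = "(cell \<times> nat) list"
type_synonym position = "cell \<Rightarrow> nat option"

definition vadd :: "cell \<Rightarrow> cell \<Rightarrow> cell" where
  "vadd v j = map2 (+) v j"

definition wf_fpattern :: "nat \<Rightarrow> fpattern \<Rightarrow> bool" where
  "wf_fpattern d q \<longleftrightarrow> (\<forall>(j, c) \<in> set q. length j = d) \<and> distinct (map fst q)"

definition appears :: "nat \<Rightarrow> fpattern \<Rightarrow> position \<Rightarrow> bool" where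
  "appears d q p \<longleftrightarrow> (\<exists>v. length v = d \<and> (\<forall>(j, c) \<in> set q. p (vadd v j) = Some c))"

definition final :: "nat \<Rightarrow> fpattern list \<Rightarrow> position \<Rightarrow> bool" where
  "final d F p \<longleftrightarrow> (\<exists>q \<in> set F. appears d q p)"

definition move :: "nat \<Rightarrow> nat list \<Rightarrow> position \<Rightarrow> position \<Rightarrow> bool" where
  "move d Al p p' \<longleftrightarrow> p' = p \<or>
     (\<exists>x c. length x = d \<and> p x = None \<and> c \<in> set Al \<and> p' = p(x \<mapsto> c))"

text \<open>wins_within d Al F n p a: the position (p, player to move), where a = True means
player A is to move, is winning for A with value at most n.\<close>
fun wins_within :: "nat \<Rightarrow> nat list \<Rightarrow> fpattern list \<Rightarrow> nat \<Rightarrow> position \<Rightarrow> bool \<Rightarrow> bool" where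
  "wins_within d Al F 0 p a = final d F p"
| "wins_within d Al F (Suc n) p a =
     (final d F p \<or>
      (a \<and> (\<exists>p'. move d Al p p' \<and> wins_within d Al F n p' False)) \<or>
      (\<not> a \<and> (\<forall>p'. move d Al p p' \<longrightarrow> wins_within d Al F n p' True)))"

definition A_wins_in :: "nat \<Rightarrow> nat list \<Rightarrow> fpattern list \<Rightarrow> nat \<Rightarrow> bool" where
  "A_wins_in d Al F T \<longleftrightarrow> wins_within d Al F T Map.empty True"

definition encode_cell :: "cell \<Rightarrow> nat" where
  "encode_cell v = list_encode (map int_encode v)"

definition encode_fpattern :: "fpattern \<Rightarrow> nat" where
  "encode_fpattern q = list_encode (map (\<lambda>(v, c). prod_encode (encode_cell v, c)) q)"

definition encode_instance :: "nat list \<Rightarrow> fpattern list \<Rightarrow> nat \<Rightarrow> nat" where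
  "encode_instance Al F T =
     prod_encode (list_encode Al, prod_encode (list_encode (map encode_fpattern F), T))"

definition domino_problem :: "nat \<Rightarrow> nat \<Rightarrow> bool" where
  "domino_problem d n \<longleftrightarrow>
     (\<exists>Al F T. n = encode_instance Al F T \<and> (\<forall>q \<in> set F. wf_fpattern d q) \<and> A_wins_in d Al F T)"

end

theory Submission
  imports Defs
begin

definition rcomp :: "nat \<Rightarrow> (nat list \<Rightarrow> nat) \<Rightarrow> bool" where
  "rcomp n F \<longleftrightarrow> (\<exists>f. \<forall>xs. length xs = n \<longrightarrow> eval f xs (F xs))"

lemma comp_cong: "rcomp n F \<Longrightarrow> (\<And>xs. length xs = n \<Longrightarrow> F xs = G xs) \<Longrightarrow> rcomp n G"
  unfolding rcomp_def by metis

lemma comp_proj: "i < n \<Longrightarrow> rcomp n (\<lambda>xs. xs ! i)"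
  unfolding rcomp_def by (rule exI[of _ "Proj i"]) (auto intro: eval.proj)

lemma comp_zero: "rcomp n (\<lambda>xs. 0)"
  unfolding rcomp_def by (rule exI[of _ Zero]) (auto intro: eval.zero)

lemma comp_suc: "rcomp n F \<Longrightarrow> rcomp n (\<lambda>xs. Suc (F xs))"
  unfolding rcomp_def
proof (elim exE)
  fix f assume f: "\<forall>xs. length xs = n \<longrightarrow> eval f xs (F xs)"
  show "\<exists>f. \<forall>xs. length xs = n \<longrightarrow> eval f xs (Suc (F xs))"
    by (rule exI[of _ "Comp Succ [f]"]) (auto intro!: eval.comp[of _ _ "[F _]"] eval.succ[of _ "[]", simplified] f[rule_format])
qed

lemma comp_const: "rcomp n (\<lambda>xs. k)"
  by (induction k) (auto intro: comp_zero comp_suc[of n "\<lambda>_. _", simplified])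

lemma comp_list:
  assumes "\<forall>F\<in>set Fs. rcomp n F"
  shows "\<exists>gs. list_all2 (\<lambda>g F. \<forall>xs. length xs = n \<longrightarrow> eval g xs (F xs)) gs Fs"
  using assms
proof (induction Fs)
  case Nil then show ?case by auto
next
  case (Cons F Fs)
  then obtain gs where "list_all2 (\<lambda>g F. \<forall>xs. length xs = n \<longrightarrow> eval g xs (F xs)) gs Fs" by auto
  moreover from Cons obtain g where "\<forall>xs. length xs = n \<longrightarrow> eval g xs (F xs)" unfolding rcomp_def by auto
  ultimately show ?case by (intro exI[of _ "g # gs"]) auto
qed

lemma comp_comp:
  assumes "rcomp m G" "length Fs = m" "\<forall>F\<in>set Fs. rcomp n F"
  shows "rcomp n (\<lambda>xs. G (map (\<lambda>F. F xs) Fs))"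
proof -
  obtain gs where gs: "list_all2 (\<lambda>g F. \<forall>xs. length xs = n \<longrightarrow> eval g xs (F xs)) gs Fs"
    using comp_list[OF assms(3)] by auto
  obtain g where g: "\<forall>ys. length ys = m \<longrightarrow> eval g ys (G ys)" using assms(1) unfolding rcomp_def by auto
  show ?thesis unfolding rcomp_def
  proof (intro exI[of _ "Comp g gs"] allI impI)
    fix xs :: "nat list" assume "length xs = n"
    have "list_all2 (\<lambda>g y. eval g xs y) gs (map (\<lambda>F. F xs) Fs)"
      using gs \<open>length xs = n\<close> by (auto simp: list_all2_conv_all_nth)
    then show "eval (Comp g gs) xs (G (map (\<lambda>F. F xs) Fs))"
      using g assms(2) by (auto intro!: eval.comp)
  qed
qed

lemma comp_prec_raw:
  assumes "rcomp n F" "rcomp (Suc (Suc n)) G"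
  shows "rcomp (Suc n) (\<lambda>xs. rec_nat (F (tl xs)) (\<lambda>k y. G (k # y # tl xs)) (hd xs))"
proof -
  obtain f where f: "\<forall>ys. length ys = n \<longrightarrow> eval f ys (F ys)" using assms(1) unfolding rcomp_def by auto
  obtain g where g: "\<forall>ys. length ys = Suc (Suc n) \<longrightarrow> eval g ys (G ys)" using assms(2) unfolding rcomp_def by auto
  have *: "eval (Prec f g) (k # ys) (rec_nat (F ys) (\<lambda>k y. G (k # y # ys)) k)" if "length ys = n" for k ys
    using that
  proof (induction k)
    case 0 then show ?case by (auto intro: eval.prec0 f[rule_format])
  next
    case (Suc k)
    then show ?case by (auto intro!: eval.precS[OF Suc.IH] g[rule_format])
  qed
  show ?thesis unfolding rcomp_def
    by (rule exI[of _ "Prec f g"]) (auto simp: length_Suc_conv intro: *)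
qed

lemma comp_iter:
  assumes "rcomp n N" "rcomp n I" "rcomp (Suc (Suc n)) (\<lambda>ys. S (ys!0) (ys!1) (drop 2 ys))"
  shows "rcomp n (\<lambda>xs. rec_nat (I xs) (\<lambda>k a. S k a xs) (N xs))"
proof -
  have "rcomp (Suc n) (\<lambda>xs. rec_nat (I (tl xs)) (\<lambda>k y. (\<lambda>ys. S (ys!0) (ys!1) (drop 2 ys)) (k # y # tl xs)) (hd xs))"
    by (rule comp_prec_raw[OF assms(2,3)])
  then have c: "rcomp (Suc n) (\<lambda>xs. rec_nat (I (tl xs)) (\<lambda>k a. S k a (tl xs)) (hd xs))" by simp
  have "rcomp n (\<lambda>xs. (\<lambda>xs. rec_nat (I (tl xs)) (\<lambda>k a. S k a (tl xs)) (hd xs)) (map (\<lambda>F. F xs) (N # map (\<lambda>i xs. xs ! i) [0..<n])))"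
    by (rule comp_comp[OF c]) (auto intro: assms(1) comp_proj)
  then show ?thesis
  proof (rule comp_cong)
    fix xs :: "nat list" assume "length xs = n"
    then have "map ((\<lambda>F. F xs) \<circ> (\<lambda>i xs. xs ! i)) [0..<n] = xs"
      using map_nth[of xs] by (simp add: o_def)
    then show "(\<lambda>xs. rec_nat (I (tl xs)) (\<lambda>k a. S k a (tl xs)) (hd xs)) (map (\<lambda>F. F xs) (N # map (\<lambda>i xs. xs ! i) [0..<n])) = rec_nat (I xs) (\<lambda>k a. S k a xs) (N xs)"
      by simp
  qed
qed

lemma comp1: "rcomp 1 G \<Longrightarrow> rcomp n A \<Longrightarrow> rcomp n (\<lambda>xs. G [A xs])"
  using comp_comp[of 1 G "[A]" n] by simp

lemma comp2: "rcomp 2 G \<Longrightarrow> rcomp n A \<Longrightarrow> rcomp n B \<Longrightarrow> rcomp n (\<lambda>xs. G [A xs, B xs])"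
  using comp_comp[of 2 G "[A, B]" n] by simp

lemma comp_nth_drop: "k + i < n \<Longrightarrow> rcomp n (\<lambda>xs. drop k xs ! i)"
  by (rule comp_cong[OF comp_proj[of "k + i" n]]) auto

lemma rec_suc: "rec_nat a (\<lambda>k x. Suc x) m = a + m" by (induction m) auto
lemma rec_addc: "rec_nat 0 (\<lambda>k x. x + c) m = m * c" by (induction m) auto
lemma rec_pred: "rec_nat 0 (\<lambda>k x. k) m = m - 1" by (induction m) auto
lemma rec_sub: "rec_nat a (\<lambda>k x. x - Suc 0) m = a - m" by (induction m) auto
lemma rec_sum: "rec_nat 0 (\<lambda>k a. a + F k) m = (\<Sum>k<m. F k)" by (induction m) auto

lemma comp_add2: "rcomp 2 (\<lambda>ys. ys!0 + ys!1)"
proof -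
  have "rcomp 2 (\<lambda>xs. rec_nat (xs!1) (\<lambda>k a. (\<lambda>k a w. Suc a) k a xs) (xs!0))"
    by (rule comp_iter) (auto intro!: comp_proj comp_suc)
  then show ?thesis
    by (rule comp_cong) (simp add: rec_suc)
qed

lemma comp_add: "rcomp n A \<Longrightarrow> rcomp n B \<Longrightarrow> rcomp n (\<lambda>xs. A xs + B xs)"
  using comp2[OF comp_add2] by simp

lemma comp_mult2: "rcomp 2 (\<lambda>ys. ys!0 * ys!1)"
proof -
  have "rcomp 2 (\<lambda>xs. rec_nat 0 (\<lambda>k a. (\<lambda>k a w. a + w!1) k a xs) (xs!0))"
    by (rule comp_iter) (auto intro!: comp_proj comp_const comp_add comp_nth_drop[of 2 1, simplified])
  then show ?thesis
    by (rule comp_cong) (simp add: rec_addc)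
qed

lemma comp_mult: "rcomp n A \<Longrightarrow> rcomp n B \<Longrightarrow> rcomp n (\<lambda>xs. A xs * B xs)"
  using comp2[OF comp_mult2] by simp

lemma comp_pred1: "rcomp 1 (\<lambda>ys. ys!0 - 1)"
proof -
  have "rcomp 1 (\<lambda>xs. rec_nat 0 (\<lambda>k a. (\<lambda>k a w. k) k a xs) (xs!0))"
    by (rule comp_iter) (auto intro!: comp_proj comp_const)
  then show ?thesis
    by (rule comp_cong) (simp add: rec_pred)
qed

lemma comp_sub2: "rcomp 2 (\<lambda>ys. ys!0 - ys!1)"
proof -
  have "rcomp 2 (\<lambda>xs. rec_nat (xs!0) (\<lambda>k a. (\<lambda>k a w. a - 1) k a xs) (xs!1))"
    by (rule comp_iter) (auto intro!: comp_proj comp1[OF comp_pred1, simplified])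
  then show ?thesis
    by (rule comp_cong) (simp add: rec_sub)
qed

lemma comp_sub: "rcomp n A \<Longrightarrow> rcomp n B \<Longrightarrow> rcomp n (\<lambda>xs. A xs - B xs)"
  using comp2[OF comp_sub2] by simp

lemma comp_drop:
  assumes "rcomp n A"
  shows "rcomp (k + n) (\<lambda>xs. A (drop k xs))"
proof -
  have "rcomp (k + n) (\<lambda>xs. A (map (\<lambda>F. F xs) (map (\<lambda>i xs. xs!(k+i)) [0..<n])))"
    by (rule comp_comp[OF assms]) (auto intro: comp_proj)
  then show ?thesis
  proof (rule comp_cong)
    fix xs :: "nat list" assume l: "length xs = k + n"
    have "map (\<lambda>i. xs!(k+i)) [0..<n] = drop k xs"
      by (rule nth_equalityI) (use l in auto)
    then show "A (map (\<lambda>F. F xs) (map (\<lambda>i xs. xs!(k+i)) [0..<n])) = A (drop k xs)"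
      by (simp add: o_def)
  qed
qed

lemma comp_drop1: "rcomp n A \<Longrightarrow> rcomp (Suc n) (\<lambda>xs. A (drop 1 xs))"
  using comp_drop[of n A 1] by simp

lemma comp_shift2:
  assumes "rcomp (Suc n) (\<lambda>ys. F (ys!0) (drop 1 ys))"
  shows "rcomp (Suc (Suc n)) (\<lambda>ys. F (ys!0) (drop 2 ys))"
proof -
  have "rcomp (Suc (Suc n)) (\<lambda>ys. (\<lambda>ys. F (ys!0) (drop 1 ys)) (map (\<lambda>F. F ys) ((\<lambda>ys. ys!0) # map (\<lambda>i ys. ys!(i+2)) [0..<n])))"
    by (rule comp_comp[OF assms]) (auto intro: comp_proj)
  then show ?thesis
  proof (rule comp_cong)
    fix ys :: "nat list" assume l: "length ys = Suc (Suc n)"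
    have "map (\<lambda>i. ys!(i+2)) [0..<n] = drop 2 ys"
      by (rule nth_equalityI) (use l in auto)
    then show "(\<lambda>ys. F (ys!0) (drop 1 ys)) (map (\<lambda>F. F ys) ((\<lambda>ys. ys!0) # map (\<lambda>i ys. ys!(i+2)) [0..<n])) = F (ys!0) (drop 2 ys)"
      by (simp add: o_def)
  qed
qed

lemma comp_sum:
  assumes "rcomp n B" "rcomp (Suc n) (\<lambda>ys. F (ys!0) (drop 1 ys))"
  shows "rcomp n (\<lambda>xs. \<Sum>k<B xs. F k xs)"
proof -
  have "rcomp n (\<lambda>xs. rec_nat 0 (\<lambda>k a. (\<lambda>k a w. a + F k w) k a xs) (B xs))"
    by (rule comp_iter) (auto intro!: assms(1) comp_const comp_add comp_proj comp_shift2[OF assms(2)])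
  then show ?thesis
    by (rule comp_cong) (simp add: rec_sum)
qed

definition ind :: "bool \<Rightarrow> nat" where "ind b = (if b then 1 else 0)"

abbreviation compP :: "nat \<Rightarrow> (nat list \<Rightarrow> bool) \<Rightarrow> bool" where
  "compP n P \<equiv> rcomp n (\<lambda>xs. ind (P xs))"

lemma compP_eq: "rcomp n A \<Longrightarrow> rcomp n B \<Longrightarrow> compP n (\<lambda>xs. A xs = B xs)"
  by (rule comp_cong[of n "\<lambda>xs. 1 - ((A xs - B xs) + (B xs - A xs))"]) (auto intro!: comp_sub comp_add comp_const simp: ind_def)

lemma compP_le: "rcomp n A \<Longrightarrow> rcomp n B \<Longrightarrow> compP n (\<lambda>xs. A xs \<le> B xs)"
  by (rule comp_cong[of n "\<lambda>xs. 1 - (A xs - B xs)"]) (auto intro!: comp_sub comp_const simp: ind_def)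

lemma compP_less: "rcomp n A \<Longrightarrow> rcomp n B \<Longrightarrow> compP n (\<lambda>xs. A xs < B xs)"
  by (rule comp_cong[of n "\<lambda>xs. 1 - (Suc (A xs) - B xs)"]) (auto intro!: comp_sub comp_suc comp_const simp: ind_def)

lemma compP_not: "compP n P \<Longrightarrow> compP n (\<lambda>xs. \<not> P xs)"
  by (rule comp_cong[of n "\<lambda>xs. 1 - ind (P xs)"]) (auto intro!: comp_sub comp_const simp: ind_def)

lemma compP_conj: "compP n P \<Longrightarrow> compP n Q \<Longrightarrow> compP n (\<lambda>xs. P xs \<and> Q xs)"
  by (rule comp_cong[of n "\<lambda>xs. ind (P xs) * ind (Q xs)"]) (auto intro!: comp_mult simp: ind_def)

lemma compP_disj: "compP n P \<Longrightarrow> compP n Q \<Longrightarrow> compP n (\<lambda>xs. P xs \<or> Q xs)"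
  by (rule comp_cong[of n "\<lambda>xs. 1 - (1 - (ind (P xs) + ind (Q xs)))"]) (auto intro!: comp_sub comp_add comp_const simp: ind_def)

lemma compP_imp: "compP n P \<Longrightarrow> compP n Q \<Longrightarrow> compP n (\<lambda>xs. P xs \<longrightarrow> Q xs)"
  by (rule comp_cong[OF compP_disj[OF compP_not]]) auto

lemma compP_iff: "compP n P \<Longrightarrow> compP n Q \<Longrightarrow> compP n (\<lambda>xs. P xs \<longleftrightarrow> Q xs)"
  by (rule comp_cong[OF compP_conj[OF compP_imp[of n P Q] compP_imp[of n Q P]]]) (auto simp: ind_def)

lemma compP_const: "compP n (\<lambda>xs. b)"
  by (rule comp_const)

lemma comp_if: "compP n P \<Longrightarrow> rcomp n A \<Longrightarrow> rcomp n B \<Longrightarrow> rcomp n (\<lambda>xs. if P xs then A xs else B xs)"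
  by (rule comp_cong[of n "\<lambda>xs. ind (P xs) * A xs + (1 - ind (P xs)) * B xs"]) (auto intro!: comp_add comp_mult comp_sub comp_const simp: ind_def)

lemma compP_bex:
  assumes "rcomp n B" "compP (Suc n) (\<lambda>ys. P (ys!0) (drop 1 ys))"
  shows "compP n (\<lambda>xs. \<exists>k<B xs. P k xs)"
proof -
  have "rcomp n (\<lambda>xs. 1 - (1 - (\<Sum>k<B xs. ind (P k xs))))"
    by (intro comp_sub comp_const comp_sum assms)
  then show ?thesis
  proof (rule comp_cong)
    fix xs :: "nat list"
    show "1 - (1 - (\<Sum>k<B xs. ind (P k xs))) = ind (\<exists>k<B xs. P k xs)"
    proof (cases "\<exists>k<B xs. P k xs")
      case True
      then obtain k where k: "k < B xs" "P k xs" by auto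
      have "ind (P k xs) \<le> (\<Sum>k<B xs. ind (P k xs))"
        using k by (intro member_le_sum) auto
      then show ?thesis using True k by (auto simp: ind_def)
    qed (auto simp: ind_def)
  qed
qed

lemma compP_ball:
  assumes "rcomp n B" "compP (Suc n) (\<lambda>ys. P (ys!0) (drop 1 ys))"
  shows "compP n (\<lambda>xs. \<forall>k<B xs. P k xs)"
proof -
  have "compP n (\<lambda>xs. \<not> (\<exists>k<B xs. \<not> P k xs))"
    by (intro compP_not compP_bex assms)
  then show ?thesis by simp
qed

lemma sum_ind_less: "m \<le> a \<Longrightarrow> (\<Sum>k<a. ind (k < m)) = m"
proof -
  assume "m \<le> a"
  then have "{..<a} \<inter> {k. k < m} = {..<m}" by auto
  then show ?thesis by (simp add: ind_def sum.If_cases)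
qed

lemma comp_div: "rcomp n A \<Longrightarrow> rcomp n B \<Longrightarrow> rcomp n (\<lambda>xs. A xs div B xs)"
proof -
  assume a: "rcomp n A" and b: "rcomp n B"
  have "rcomp n (\<lambda>xs. \<Sum>k<A xs. ind (0 < B xs \<and> Suc k * B xs \<le> A xs))"
    by (intro comp_sum a compP_conj compP_less compP_le comp_mult comp_suc comp_proj comp_const
        comp_nth_drop comp_drop1 a b) auto
  then show ?thesis
  proof (rule comp_cong)
    fix xs :: "nat list"
    show "(\<Sum>k<A xs. ind (0 < B xs \<and> Suc k * B xs \<le> A xs)) = A xs div B xs"
    proof (cases "B xs = 0")
      case False
      then have "(\<Sum>k<A xs. ind (0 < B xs \<and> Suc k * B xs \<le> A xs)) = (\<Sum>k<A xs. ind (k < A xs div B xs))"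
      proof (intro sum.cong refl)
        fix k assume "k \<in> {..<A xs}"
        have "Suc k * B xs \<le> A xs \<longleftrightarrow> Suc k \<le> A xs div B xs"
          using False by (simp add: less_eq_div_iff_mult_less_eq)
        then show "ind (0 < B xs \<and> Suc k * B xs \<le> A xs) = ind (k < A xs div B xs)"
          using False by (simp add: Suc_le_eq)
      qed
      also have "\<dots> = A xs div B xs" by (rule sum_ind_less) simp
      finally show ?thesis .
    qed (simp add: ind_def)
  qed
qed

lemma comp_mod: "rcomp n A \<Longrightarrow> rcomp n B \<Longrightarrow> rcomp n (\<lambda>xs. A xs mod B xs)"
  by (rule comp_cong[of n "\<lambda>xs. A xs - B xs * (A xs div B xs)"])
     (auto intro!: comp_sub comp_mult comp_div simp: minus_div_mult_eq_mod[symmetric] mult.commute)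

lemma rec_pow: "rec_nat (Suc 0) (\<lambda>k x. x * c) m = c ^ m" by (induction m) (auto simp: mult.commute)

lemma comp_pow: "rcomp n A \<Longrightarrow> rcomp n B \<Longrightarrow> rcomp n (\<lambda>xs. A xs ^ B xs)"
proof -
  assume a: "rcomp n A" and b: "rcomp n B"
  have "rcomp n (\<lambda>xs. rec_nat 1 (\<lambda>k x. (\<lambda>k x w. x * A w) k x xs) (B xs))"
    by (rule comp_iter) (auto intro!: b comp_const comp_mult comp_proj comp_drop[of n A 2, simplified] a)
  then show ?thesis by (rule comp_cong) (simp add: rec_pow)
qed


definition fstd :: "nat \<Rightarrow> nat" where "fstd n = fst (prod_decode n)"
definition sndd :: "nat \<Rightarrow> nat" where "sndd n = snd (prod_decode n)"

lemma prod_encode_alt: "prod_encode (a, b) = (a + b) * Suc (a + b) div 2 + a"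
  by (simp add: prod_encode_def triangle_def)

lemma fstd_sum: "fstd n = (\<Sum>a<Suc n. \<Sum>b<Suc n. ind (prod_encode (a, b) = n) * a)"
proof -
  obtain a0 b0 where ab: "prod_decode n = (a0, b0)" by fastforce
  have n: "n = prod_encode (a0, b0)" using ab by (metis prod_decode_inverse)
  have le: "a0 < Suc n" "b0 < Suc n" using n le_prod_encode_1 le_prod_encode_2 by (metis le_imp_less_Suc)+
  have "(\<Sum>a<Suc n. \<Sum>b<Suc n. ind (prod_encode (a, b) = n) * a) = (\<Sum>a<Suc n. if a = a0 then a0 else 0)"
  proof (intro sum.cong refl)
    fix a assume "a \<in> {..<Suc n}"
    show "(\<Sum>b<Suc n. ind (prod_encode (a, b) = n) * a) = (if a = a0 then a0 else 0)"
    proof (cases "a = a0")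
      case True
      have "(\<Sum>b<Suc n. ind (prod_encode (a, b) = n) * a) = (\<Sum>b<Suc n. if b = b0 then a else 0)"
        by (intro sum.cong refl) (auto simp: ind_def n True)
      then show ?thesis using le True by simp
    next
      case False
      then show ?thesis by (auto simp: ind_def n intro!: sum.neutral)
    qed
  qed
  also have "\<dots> = a0" using le by simp
  finally show ?thesis using ab by (simp add: fstd_def)
qed

lemma sndd_sum: "sndd n = (\<Sum>a<Suc n. \<Sum>b<Suc n. ind (prod_encode (a, b) = n) * b)"
proof -
  obtain a0 b0 where ab: "prod_decode n = (a0, b0)" by fastforce
  have n: "n = prod_encode (a0, b0)" using ab by (metis prod_decode_inverse)
  have le: "a0 < Suc n" "b0 < Suc n" using n le_prod_encode_1 le_prod_encode_2 by (metis le_imp_less_Suc)+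
  have "(\<Sum>a<Suc n. \<Sum>b<Suc n. ind (prod_encode (a, b) = n) * b) = (\<Sum>a<Suc n. if a = a0 then b0 else 0)"
  proof (intro sum.cong refl)
    fix a assume "a \<in> {..<Suc n}"
    show "(\<Sum>b<Suc n. ind (prod_encode (a, b) = n) * b) = (if a = a0 then b0 else 0)"
    proof (cases "a = a0")
      case True
      have "(\<Sum>b<Suc n. ind (prod_encode (a, b) = n) * b) = (\<Sum>b<Suc n. if b = b0 then b0 else 0)"
        by (intro sum.cong refl) (auto simp: ind_def n True)
      then show ?thesis using le True by simp
    next
      case False
      then show ?thesis by (auto simp: ind_def n intro!: sum.neutral)
    qed
  qed
  also have "\<dots> = b0" using le by simp
  finally show ?thesis using ab by (simp add: sndd_def)
qed

lemma comp_penc: "rcomp n A \<Longrightarrow> rcomp n B \<Longrightarrow> rcomp n (\<lambda>xs. prod_encode (A xs, B xs))"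
  unfolding prod_encode_alt by (intro comp_add comp_div comp_mult comp_suc comp_const)

lemma comp_fstd: "rcomp n A \<Longrightarrow> rcomp n (\<lambda>xs. fstd (A xs))"
proof -
  have "rcomp 1 (\<lambda>ys. \<Sum>a<Suc (ys!0). \<Sum>b<Suc (ys!0). ind (prod_encode (a, b) = ys!0) * a)"
    by (intro comp_sum comp_suc comp_proj comp_mult compP_eq comp_penc comp_nth_drop comp_drop1) auto
  then have "rcomp 1 (\<lambda>ys. fstd (ys!0))" by (rule comp_cong) (simp add: fstd_sum)
  then show "rcomp n A \<Longrightarrow> rcomp n (\<lambda>xs. fstd (A xs))" using comp1 by fastforce
qed

lemma comp_sndd: "rcomp n A \<Longrightarrow> rcomp n (\<lambda>xs. sndd (A xs))"
proof -
  have "rcomp 1 (\<lambda>ys. \<Sum>a<Suc (ys!0). \<Sum>b<Suc (ys!0). ind (prod_encode (a, b) = ys!0) * b)"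
    by (intro comp_sum comp_suc comp_proj comp_mult compP_eq comp_penc comp_nth_drop comp_drop1) auto
  then have "rcomp 1 (\<lambda>ys. sndd (ys!0))" by (rule comp_cong) (simp add: sndd_sum)
  then show "rcomp n A \<Longrightarrow> rcomp n (\<lambda>xs. sndd (A xs))" using comp1 by fastforce
qed

lemma fstd_enc[simp]: "fstd (prod_encode (a, b)) = a" by (simp add: fstd_def)
lemma sndd_enc[simp]: "sndd (prod_encode (a, b)) = b" by (simp add: sndd_def)
lemma fstd_sndd: "prod_encode (fstd n, sndd n) = n" by (simp add: fstd_def sndd_def)

definition hdc :: "nat \<Rightarrow> nat" where "hdc s = fstd (s - 1)"
definition tlc :: "nat \<Rightarrow> nat" where "tlc s = sndd (s - 1)"
definition tlcs :: "nat \<Rightarrow> nat \<Rightarrow> nat" where "tlcs s i = rec_nat s (\<lambda>k a. tlc a) i"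
definition nthc :: "nat \<Rightarrow> nat \<Rightarrow> nat" where "nthc s i = hdc (tlcs s i)"
definition lenc :: "nat \<Rightarrow> nat" where "lenc s = (\<Sum>i<s. ind (tlcs s i \<noteq> 0))"

lemma tlc_enc: "tlc (list_encode xs) = list_encode (tl xs)"
proof (cases xs)
  case Nil
  have "prod_decode 0 = (0, 0)" by (simp add: prod_decode_def prod_decode_aux.simps)
  then show ?thesis using Nil by (simp add: tlc_def sndd_def)
qed (simp add: tlc_def)

lemma tlcs_enc: "tlcs (list_encode xs) i = list_encode (drop i xs)"
  by (induction i) (simp_all add: tlcs_def tlc_enc drop_Suc tl_drop)

lemma nthc_enc: "i < length xs \<Longrightarrow> nthc (list_encode xs) i = xs ! i"
  by (simp add: nthc_def tlcs_enc hdc_def Cons_nth_drop_Suc[symmetric])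

lemma list_encode_0: "list_encode xs = 0 \<longleftrightarrow> xs = []"
  by (cases xs) auto

lemma length_le_encode: "length xs \<le> list_encode xs"
proof (induction xs)
  case (Cons x xs)
  then show ?case using le_prod_encode_2[of "list_encode xs" x] by simp
qed simp

lemma member_lt_encode: "x \<in> set xs \<Longrightarrow> x < list_encode xs"
proof (induction xs)
  case (Cons y xs)
  then show ?case using le_prod_encode_1[of y "list_encode xs"] le_prod_encode_2[of "list_encode xs" y] by fastforce
qed simp

lemma lenc_enc: "lenc (list_encode xs) = length xs"
proof -
  have "lenc (list_encode xs) = (\<Sum>i<list_encode xs. ind (i < length xs))"
    unfolding lenc_def by (intro sum.cong refl) (simp add: tlcs_enc list_encode_0 not_le)
  also have "\<dots> = length xs" by (rule sum_ind_less[OF length_le_encode])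
  finally show ?thesis .
qed

lemma comp_hdc: "rcomp n A \<Longrightarrow> rcomp n (\<lambda>xs. hdc (A xs))"
  unfolding hdc_def by (intro comp_fstd comp_sub comp_const)

lemma comp_tlc: "rcomp n A \<Longrightarrow> rcomp n (\<lambda>xs. tlc (A xs))"
  unfolding tlc_def by (intro comp_sndd comp_sub comp_const)

lemma comp_tlcs: "rcomp n A \<Longrightarrow> rcomp n B \<Longrightarrow> rcomp n (\<lambda>xs. tlcs (A xs) (B xs))"
  unfolding tlcs_def by (intro comp_iter comp_tlc comp_proj) auto

lemma comp_nthc: "rcomp n A \<Longrightarrow> rcomp n B \<Longrightarrow> rcomp n (\<lambda>xs. nthc (A xs) (B xs))"
  unfolding nthc_def by (intro comp_hdc comp_tlcs)

lemma comp_lenc: "rcomp n A \<Longrightarrow> rcomp n (\<lambda>xs. lenc (A xs))"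
  unfolding lenc_def by (intro comp_sum compP_not compP_eq comp_tlcs comp_drop1 comp_proj comp_const) auto

definition ip :: "nat \<Rightarrow> nat" where "ip z = (if even z then z div 2 else 0)"
definition inn :: "nat \<Rightarrow> nat" where "inn z = (if even z then 0 else Suc (z div 2))"

lemma ip_enc: "ip (int_encode v) = nat v"
  by (simp add: ip_def int_encode_def sum_encode_def)

lemma inn_enc: "inn (int_encode v) = nat (- v)"
  by (simp add: inn_def int_encode_def sum_encode_def Suc_nat_eq_nat_zadd1)

lemma compP_even: "rcomp n A \<Longrightarrow> compP n (\<lambda>xs. even (A xs))"
  by (rule comp_cong[of n "\<lambda>xs. 1 - A xs mod 2"]) (auto intro!: comp_sub comp_mod comp_const simp: ind_def odd_iff_mod_2_eq_one)

lemma comp_ip: "rcomp n A \<Longrightarrow> rcomp n (\<lambda>xs. ip (A xs))"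
  unfolding ip_def by (intro comp_if compP_even comp_div comp_const)

lemma comp_inn: "rcomp n A \<Longrightarrow> rcomp n (\<lambda>xs. inn (A xs))"
  unfolding inn_def by (intro comp_if compP_even comp_div comp_suc comp_const)


definition close :: "nat \<Rightarrow> int \<Rightarrow> cell \<Rightarrow> cell \<Rightarrow> bool" where
  "close d L x y \<longleftrightarrow> (\<forall>t<d. \<bar>x!t - y!t\<bar> \<le> L)"

definition okp :: "nat \<Rightarrow> position \<Rightarrow> bool" where
  "okp d p \<longleftrightarrow> finite (dom p) \<and> (\<forall>x\<in>dom p. length x = d)"

definition sim :: "nat \<Rightarrow> int \<Rightarrow> position \<Rightarrow> position \<Rightarrow> (cell \<Rightarrow> cell) \<Rightarrow> bool" where
  "sim d L p p' \<phi> \<longleftrightarrow>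
    (\<forall>x\<in>dom p. p' (\<phi> x) = p x) \<and>
    (\<forall>y\<in>dom p'. \<exists>x\<in>dom p. \<phi> x = y) \<and>
    (\<forall>x\<in>dom p. \<forall>y\<in>dom p. close d L x y \<longrightarrow> (\<forall>t<d. \<phi> y ! t - \<phi> x ! t = y!t - x!t)) \<and>
    (\<forall>x\<in>dom p. \<forall>y\<in>dom p. \<not> close d L x y \<longrightarrow> \<not> close d L (\<phi> x) (\<phi> y))"

lemma close_sym: "close d L x y \<longleftrightarrow> close d L y x"
  unfolding close_def by (auto simp: abs_minus_commute)

lemma close_mono: "close d L x y \<Longrightarrow> L \<le> L' \<Longrightarrow> close d L' x y"
  unfolding close_def by force

lemma close_trans: "close d L x y \<Longrightarrow> close d L' y z \<Longrightarrow> close d (L + L') x z"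
  unfolding close_def by (smt (verit))

lemma close_diff: "(\<forall>t<d. x'!t - y'!t = x!t - y!t) \<Longrightarrow> close d L x y \<longleftrightarrow> close d L x' y'"
  unfolding close_def by simp

lemma close_diff2: "(\<forall>t<d. y'!t - x'!t = y!t - x!t) \<Longrightarrow> close d L x y \<longleftrightarrow> close d L x' y'"
  unfolding close_def by (metis abs_minus_commute)

lemma dom_cell_eq: "length x = d \<Longrightarrow> length y = d \<Longrightarrow> (\<forall>t<d. x!t = y!t) \<Longrightarrow> x = y"
  by (simp add: nth_equalityI)

lemma sim_img: "sim d L p p' \<phi> \<Longrightarrow> x \<in> dom p \<Longrightarrow> \<phi> x \<in> dom p'"
  unfolding sim_def by (metis domIff)

lemma sim_inj:
  assumes "okp d p" "sim d L p p' \<phi>" "0 \<le> L"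
  shows "inj_on \<phi> (dom p)"
proof (rule inj_onI)
  fix x y assume xy: "x \<in> dom p" "y \<in> dom p" "\<phi> x = \<phi> y"
  have "close d L (\<phi> x) (\<phi> y)" using xy assms(3) unfolding close_def by simp
  then have "close d L x y" using assms(2) xy unfolding sim_def by blast
  then have "\<forall>t<d. y!t - x!t = 0" using assms(2) xy unfolding sim_def by force
  then show "x = y" using assms(1) xy unfolding okp_def by (intro dom_cell_eq) auto
qed

lemma sim_sym:
  assumes "okp d p" "sim d L p p' \<phi>" "0 \<le> L"
  shows "sim d L p' p (inv_into (dom p) \<phi>)"
proof -
  have inj: "inj_on \<phi> (dom p)" by (rule sim_inj[OF assms])
  let ?\<psi> = "inv_into (dom p) \<phi>"
  have s: "(\<forall>x\<in>dom p. p' (\<phi> x) = p x)" "(\<forall>y\<in>dom p'. \<exists>x\<in>dom p. \<phi> x = y)"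
    "(\<forall>x\<in>dom p. \<forall>y\<in>dom p. close d L x y \<longrightarrow> (\<forall>t<d. \<phi> y ! t - \<phi> x ! t = y!t - x!t))"
    "(\<forall>x\<in>dom p. \<forall>y\<in>dom p. \<not> close d L x y \<longrightarrow> \<not> close d L (\<phi> x) (\<phi> y))"
    using assms(2) unfolding sim_def by blast+
  have img: "y \<in> dom p' \<Longrightarrow> ?\<psi> y \<in> dom p \<and> \<phi> (?\<psi> y) = y" for y
    using s(2) by (metis f_inv_into_f image_eqI inv_into_into)
  have bk: "x \<in> dom p \<Longrightarrow> ?\<psi> (\<phi> x) = x" for x using inj by simp
  show ?thesis unfolding sim_def
  proof (intro conjI ballI impI allI)
    fix y assume "y \<in> dom p'" then show "p (?\<psi> y) = p' y" using img s(1) by metis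
  next
    fix x assume "x \<in> dom p" then show "\<exists>y\<in>dom p'. ?\<psi> y = x" using bk sim_img[OF assms(2)] by metis
  next
    fix y1 y2 t assume h: "y1 \<in> dom p'" "y2 \<in> dom p'" "close d L y1 y2" "t < d"
    have c: "close d L (?\<psi> y1) (?\<psi> y2)" using s(4) img h by metis
    show "?\<psi> y2 ! t - ?\<psi> y1 ! t = y2 ! t - y1 ! t"
      using s(3) img h c by metis
  next
    fix y1 y2 assume h: "y1 \<in> dom p'" "y2 \<in> dom p'" "\<not> close d L y1 y2"
    show "\<not> close d L (?\<psi> y1) (?\<psi> y2)"
    proof
      assume c: "close d L (?\<psi> y1) (?\<psi> y2)"
      then have "\<forall>t<d. \<phi> (?\<psi> y2) ! t - \<phi> (?\<psi> y1) ! t = ?\<psi> y2 ! t - ?\<psi> y1 ! t"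
        using s(3) img h by blast
      then have "\<forall>t<d. y1 ! t - y2 ! t = ?\<psi> y1 ! t - ?\<psi> y2 ! t" using img h by (metis minus_diff_eq)
      then have "close d L y1 y2" using c close_diff by blast
      then show False using h by simp
    qed
  qed
qed

lemma sim_mono:
  assumes "sim d L p p' \<phi>" "L' \<le> L"
  shows "sim d L' p p' \<phi>"
  unfolding sim_def
proof (intro conjI ballI impI allI)
  show "\<And>x. x \<in> dom p \<Longrightarrow> p' (\<phi> x) = p x" "\<And>y. y \<in> dom p' \<Longrightarrow> \<exists>x\<in>dom p. \<phi> x = y"
    using assms(1) unfolding sim_def by blast+
next
  fix x y t assume "x \<in> dom p" "y \<in> dom p" "close d L' x y" "t < d"
  then show "\<phi> y ! t - \<phi> x ! t = y ! t - x ! t"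
    using assms close_mono unfolding sim_def by blast
next
  fix x y assume h: "x \<in> dom p" "y \<in> dom p" "\<not> close d L' x y"
  show "\<not> close d L' (\<phi> x) (\<phi> y)"
  proof (cases "close d L x y")
    case True
    then have "\<forall>t<d. \<phi> y ! t - \<phi> x ! t = y ! t - x ! t" using assms h unfolding sim_def by blast
    then have "\<forall>t<d. \<phi> x ! t - \<phi> y ! t = x ! t - y ! t" by (metis minus_diff_eq)
    then show ?thesis using h close_diff by blast
  next
    case False
    then have "\<not> close d L (\<phi> x) (\<phi> y)" using assms h unfolding sim_def by blast
    then show ?thesis using close_mono assms(2) by blast
  qed
qed

lemma nth_vadd: "t < length v \<Longrightarrow> t < length j \<Longrightarrow> vadd v j ! t = v!t + j!t"
  by (simp add: vadd_def)

lemma length_vadd: "length (vadd v j) = min (length v) (length j)"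
  by (simp add: vadd_def)

definition pclose :: "nat \<Rightarrow> int \<Rightarrow> fpattern list \<Rightarrow> bool" where
  "pclose d L F \<longleftrightarrow> (\<forall>q\<in>set F. (\<forall>(j,c)\<in>set q. length j = d) \<and>
      (\<forall>(j,c)\<in>set q. \<forall>(j',c')\<in>set q. close d L j j'))"

lemma pclose_mono: "pclose d L F \<Longrightarrow> L \<le> L' \<Longrightarrow> pclose d L' F"
  unfolding pclose_def using close_mono by fast

lemma sim_appears:
  assumes s: "sim d L p p' \<phi>" and ok: "okp d p'"
    and len: "\<forall>(j,c)\<in>set q. length j = d" and cl: "\<forall>(j,c)\<in>set q. \<forall>(j',c')\<in>set q. close d L j j'"
    and ap: "appears d q p"
  shows "appears d q p'"
proof (cases q)
  case Nil
  then show ?thesis using ap by (auto simp: appears_def)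
next
  case (Cons jc0 rest)
  obtain j0 c0 where jc0: "jc0 = (j0, c0)" by fastforce
  obtain v where v: "length v = d" "\<forall>(j, c)\<in>set q. p (vadd v j) = Some c"
    using ap unfolding appears_def by auto
  have j0: "(j0, c0) \<in> set q" "length j0 = d" using Cons jc0 len by auto
  define x0 where "x0 = vadd v j0"
  have x0: "x0 \<in> dom p" using v j0 x0_def by auto
  define v' where "v' = map (\<lambda>t. \<phi> x0 ! t - j0 ! t) [0..<d]"
  show ?thesis unfolding appears_def
  proof (intro exI[of _ v'] conjI ballI)
    show "length v' = d" by (simp add: v'_def)
  next
    fix jc assume jc: "jc \<in> set q"
    obtain j c where jcd: "jc = (j, c)" by fastforce
    have lj: "length j = d" using len jc jcd by auto
    define x where "x = vadd v j"
    have x: "x \<in> dom p" "p x = Some c" using v jc jcd x_def by auto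
    have cjj: "close d L j0 j" using cl jc jcd j0 by fastforce
    have dx: "\<forall>t<d. x!t - x0!t = j!t - j0!t"
      using v lj j0 by (simp add: x_def x0_def nth_vadd)
    have cx: "close d L x0 x" using cjj dx close_diff2[of d x x0 j j0 L] by blast
    have dphi: "\<forall>t<d. \<phi> x ! t - \<phi> x0 ! t = x!t - x0!t" using s x x0 cx unfolding sim_def by blast
    have "\<phi> x \<in> dom p'" using sim_img[OF s x(1)] .
    then have lphi: "length (\<phi> x) = d" using ok unfolding okp_def by auto
    have eq: "vadd v' j = \<phi> x"
      by (rule dom_cell_eq) (use lphi lj dx dphi in \<open>auto simp: length_vadd v'_def nth_vadd\<close>)
    have "p' (\<phi> x) = Some c" using s x unfolding sim_def by auto
    then show "case jc of (j, c) \<Rightarrow> p' (vadd v' j) = Some c" using eq jcd by simp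
  qed
qed

lemma sim_final:
  assumes "sim d L p p' \<phi>" "okp d p'" "pclose d L F" "final d F p"
  shows "final d F p'"
proof -
  obtain q where q: "q \<in> set F" "appears d q p" using assms(4) unfolding final_def by auto
  then have "appears d q p'" using assms(1,2,3) sim_appears[of d L p p' \<phi> q] unfolding pclose_def by blast
  then show ?thesis using q unfolding final_def by auto
qed

lemma sim_len: "sim d L p p' \<phi> \<Longrightarrow> okp d p' \<Longrightarrow> x \<in> dom p \<Longrightarrow> length (\<phi> x) = d"
  using sim_img unfolding okp_def by blast

lemma close_refl: "0 \<le> L \<Longrightarrow> close d L x x"
  unfolding close_def by simp

lemma sim_ext:
  assumes ok: "okp d p" "okp d p'" and s: "sim d L p p' \<phi>" and L: "0 \<le> L'" "L' \<le> L"
    and z: "p z = None" "p' z' = None" "length z = d" "length z' = d"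
    and H3: "\<forall>y\<in>dom p. close d L' z y \<longrightarrow> (\<forall>t<d. \<phi> y!t - z'!t = y!t - z!t)"
    and H4: "\<forall>y\<in>dom p. \<not> close d L' z y \<longrightarrow> \<not> close d L' z' (\<phi> y)"
  shows "sim d L' (p(z\<mapsto>c)) (p'(z'\<mapsto>c)) (\<phi>(z:=z'))"
proof -
  have s': "sim d L' p p' \<phi>" using sim_mono[OF s L(2)] .
  have s1: "\<forall>x\<in>dom p. p' (\<phi> x) = p x" and s2: "\<forall>y\<in>dom p'. \<exists>x\<in>dom p. \<phi> x = y"
    and s3: "\<forall>x\<in>dom p. \<forall>y\<in>dom p. close d L' x y \<longrightarrow> (\<forall>t<d. \<phi> y ! t - \<phi> x ! t = y!t - x!t)"
    and s4: "\<forall>x\<in>dom p. \<forall>y\<in>dom p. \<not> close d L' x y \<longrightarrow> \<not> close d L' (\<phi> x) (\<phi> y)"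
    using s' unfolding sim_def by blast+
  have nz: "x \<in> dom p \<Longrightarrow> x \<noteq> z" for x using z by auto
  have nz': "x \<in> dom p \<Longrightarrow> \<phi> x \<noteq> z'" for x using z sim_img[OF s] by fastforce
  show ?thesis unfolding sim_def
  proof (intro conjI ballI impI allI)
    fix x assume "x \<in> dom (p(z \<mapsto> c))"
    then show "(p'(z' \<mapsto> c)) ((\<phi>(z := z')) x) = (p(z \<mapsto> c)) x"
      using s1 nz nz' by (cases "x = z") auto
  next
    fix y assume "y \<in> dom (p'(z' \<mapsto> c))"
    show "\<exists>x\<in>dom (p(z \<mapsto> c)). (\<phi>(z := z')) x = y"
    proof (cases "y = z'")
      case True then show ?thesis by (intro bexI[of _ z]) auto
    next
      case False
      then have "y \<in> dom p'" using \<open>y \<in> dom (p'(z' \<mapsto> c))\<close> by auto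
      then obtain x where "x \<in> dom p" "\<phi> x = y" using s2 by blast
      then show ?thesis using nz[of x] by (intro bexI[of _ x]) auto
    qed
  next
    fix x y t assume h: "x \<in> dom (p(z \<mapsto> c))" "y \<in> dom (p(z \<mapsto> c))" "close d L' x y" "t < d"
    show "(\<phi>(z := z')) y ! t - (\<phi>(z := z')) x ! t = y ! t - x ! t"
    proof (cases "x = z")
      case True
      show ?thesis
      proof (cases "y = z")
        case False
        then have "y \<in> dom p" using h by auto
        then show ?thesis using True False H3 h by auto
      qed (use True in auto)
    next
      case False
      then have x: "x \<in> dom p" using h by auto
      show ?thesis
      proof (cases "y = z")
        case True
        have "close d L' z x" using h True close_sym by blast
        then have "\<phi> x ! t - z' ! t = x ! t - z ! t" using H3 x h by blast
        then show ?thesis using True False by simp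
      next
        case False
        then show ?thesis using x h s3 \<open>x \<noteq> z\<close> by auto
      qed
    qed
  next
    fix x y assume h: "x \<in> dom (p(z \<mapsto> c))" "y \<in> dom (p(z \<mapsto> c))" "\<not> close d L' x y"
    show "\<not> close d L' ((\<phi>(z := z')) x) ((\<phi>(z := z')) y)"
    proof (cases "x = z")
      case True
      show ?thesis
      proof (cases "y = z")
        case False
        then have "y \<in> dom p" using h by auto
        then show ?thesis using True False H4 h by auto
      qed (use True h close_refl[OF L(1)] in auto)
    next
      case False
      then have x: "x \<in> dom p" using h by auto
      show ?thesis
      proof (cases "y = z")
        case True
        have "\<not> close d L' z x" using h True close_sym by blast
        then have "\<not> close d L' z' (\<phi> x)" using H4 x by blast
        then show ?thesis using True False close_sym by fastforce
      next
        case False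
        then show ?thesis using x h s4 \<open>x \<noteq> z\<close> by auto
      qed
    qed
  qed
qed

lemma far_point:
  assumes "okp d p'" "0 < d" "0 \<le> L"
  shows "\<exists>z'. length z' = d \<and> p' z' = None \<and> (\<forall>y\<in>dom p'. \<not> close d L y z')"
proof -
  define M where "M = Max (insert 0 ((\<lambda>y. y!0) ` dom p'))"
  have fin: "finite (insert 0 ((\<lambda>y. y!0) ` dom p'))" using assms(1) unfolding okp_def by auto
  have M: "y \<in> dom p' \<Longrightarrow> y!0 \<le> M" for y unfolding M_def using fin by (intro Max_ge) auto
  define z' where "z' = (M + L + 1) # replicate (d - 1) (0::int)"
  have lz: "length z' = d" using assms(2) by (simp add: z'_def)
  have far: "\<forall>y\<in>dom p'. \<not> close d L y z'"
  proof (intro ballI notI)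
    fix y assume "y \<in> dom p'" "close d L y z'"
    then have "\<bar>y!0 - z'!0\<bar> \<le> L" using assms(2) unfolding close_def by blast
    then show False using M[OF \<open>y \<in> dom p'\<close>] by (simp add: z'_def)
  qed
  moreover have "p' z' = None"
    using far close_refl[OF assms(3)] by auto
  ultimately show ?thesis using lz by blast
qed

lemma sim_step:
  assumes ok: "okp d p" "okp d p'" and s: "sim d L p p' \<phi>" and L: "0 \<le> L'" "2 * L' \<le> L"
    and z: "length z = d" "p z = None" and d: "0 < d"
  shows "\<exists>z' \<phi>'. length z' = d \<and> p' z' = None \<and> sim d L' (p(z\<mapsto>c)) (p'(z'\<mapsto>c)) \<phi>'"
proof -
  have LL: "L' \<le> L" using L by simp
  have s3: "\<forall>x\<in>dom p. \<forall>y\<in>dom p. close d L x y \<longrightarrow> (\<forall>t<d. \<phi> y ! t - \<phi> x ! t = y!t - x!t)"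
    and s4: "\<forall>x\<in>dom p. \<forall>y\<in>dom p. \<not> close d L x y \<longrightarrow> \<not> close d L (\<phi> x) (\<phi> y)"
    and s2: "\<forall>y\<in>dom p'. \<exists>x\<in>dom p. \<phi> x = y"
    using s unfolding sim_def by blast+
  show ?thesis
  proof (cases "\<exists>x0\<in>dom p. close d L' x0 z")
    case True
    then obtain x0 where x0: "x0 \<in> dom p" "close d L' x0 z" by auto
    define z' where "z' = map (\<lambda>t. \<phi> x0 ! t + (z!t - x0!t)) [0..<d]"
    have lz': "length z' = d" by (simp add: z'_def)
    have z'n: "t < d \<Longrightarrow> z'!t = \<phi> x0 ! t + (z!t - x0!t)" for t by (simp add: z'_def)
    have key: "\<forall>t<d. \<phi> y ! t - \<phi> x0 ! t = y!t - x0!t" if y: "y \<in> dom p" "close d L' z' (\<phi> y)" for y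
    proof -
      have "close d L' (\<phi> x0) z'" using x0(2) z'n unfolding close_def by auto
      then have "close d (L' + L') (\<phi> x0) (\<phi> y)" using y close_trans by blast
      then have "close d L (\<phi> x0) (\<phi> y)" using close_mono L by fastforce
      then have "close d L x0 y" using s4 x0 y by blast
      then show ?thesis using s3 x0 y by blast
    qed
    have pz': "p' z' = None"
    proof (rule ccontr)
      assume "p' z' \<noteq> None"
      then obtain y where y: "y \<in> dom p" "\<phi> y = z'" using s2 by blast
      have "close d L' z' (\<phi> y)" using y close_refl L by auto
      then have "\<forall>t<d. \<phi> y ! t - \<phi> x0 ! t = y!t - x0!t" using key y by blast
      then have "\<forall>t<d. z!t = y!t" using y z'n by fastforce
      then have "z = y" using z ok(1) y unfolding okp_def by (intro dom_cell_eq) auto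
      then show False using y z by auto
    qed
    have H3: "\<forall>y\<in>dom p. close d L' z y \<longrightarrow> (\<forall>t<d. \<phi> y!t - z'!t = y!t - z!t)"
    proof (intro ballI impI allI)
      fix y t assume y: "y \<in> dom p" "close d L' z y" "t < d"
      have "close d (L' + L') x0 y" using x0(2) y(2) close_trans by blast
      then have "close d L x0 y" using close_mono L by fastforce
      then have "\<phi> y ! t - \<phi> x0 ! t = y!t - x0!t" using s3 x0 y by blast
      then show "\<phi> y!t - z'!t = y!t - z!t" using z'n[OF y(3)] by simp
    qed
    have H4: "\<forall>y\<in>dom p. \<not> close d L' z y \<longrightarrow> \<not> close d L' z' (\<phi> y)"
    proof (intro ballI impI notI)
      fix y assume y: "y \<in> dom p" "\<not> close d L' z y" "close d L' z' (\<phi> y)"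
      have "\<forall>t<d. \<phi> y ! t - \<phi> x0 ! t = y!t - x0!t" using key y by blast
      then have "\<forall>t<d. \<phi> y ! t - z' ! t = y!t - z!t" using z'n by auto
      then have "close d L' z y" using y(3) close_diff2[of d "\<phi> y" z' y z L'] by blast
      then show False using y by blast
    qed
    show ?thesis
      using sim_ext[OF ok s L(1) LL z(2) pz' z(1) lz' H3 H4] lz' pz' by blast
  next
    case False
    obtain z' where z': "length z' = d" "p' z' = None" "\<forall>y\<in>dom p'. \<not> close d L' y z'"
      using far_point[OF ok(2) d L(1)] by blast
    have H3: "\<forall>y\<in>dom p. close d L' z y \<longrightarrow> (\<forall>t<d. \<phi> y!t - z'!t = y!t - z!t)"
      using False close_sym by blast
    have H4: "\<forall>y\<in>dom p. \<not> close d L' z y \<longrightarrow> \<not> close d L' z' (\<phi> y)"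
      using z'(3) sim_img[OF s] close_sym by blast
    show ?thesis
      using sim_ext[OF ok s L(1) LL z(2) z'(2) z(1) z'(1) H3 H4] z' by blast
  qed
qed

lemma okp_upd: "okp d p \<Longrightarrow> length z = d \<Longrightarrow> okp d (p(z\<mapsto>c))"
  unfolding okp_def by auto

lemma sim_wins:
  assumes d: "0 < d" and L0: "\<And>k. 0 \<le> Lf k" and L2: "\<And>k. 2 * Lf k \<le> Lf (Suc k)"
    and pc: "\<And>k. pclose d (Lf k) F"
  shows "okp d p \<Longrightarrow> okp d p' \<Longrightarrow> sim d (Lf n) p p' \<phi> \<Longrightarrow> wins_within d Al F n p a \<Longrightarrow> wins_within d Al F n p' a"
proof (induction n arbitrary: p p' \<phi> a)
  case 0
  then show ?case using sim_final[OF _ _ pc] by auto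
next
  case (Suc n)
  have LL: "Lf n \<le> Lf (Suc n)" using L0 L2 by (smt (verit))
  have fin: "final d F p \<Longrightarrow> final d F p'" using sim_final[OF Suc.prems(3) Suc.prems(2) pc] .
  consider "final d F p" | "a" "\<exists>p1. move d Al p p1 \<and> wins_within d Al F n p1 False"
    | "\<not> a" "\<forall>p1. move d Al p p1 \<longrightarrow> wins_within d Al F n p1 True"
    using Suc.prems(4) by auto
  then show ?case
  proof cases
    case 1 then show ?thesis using fin by simp
  next
    case 2
    then obtain p1 where p1: "move d Al p p1" "wins_within d Al F n p1 False" by blast
    show ?thesis
    proof (cases "p1 = p")
      case True
      have "wins_within d Al F n p' False"
        using Suc.IH[OF Suc.prems(1,2) sim_mono[OF Suc.prems(3) LL]] p1 True by blast
      then show ?thesis using 2 by (auto simp: move_def)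
    next
      case False
      then obtain z c where zc: "length z = d" "p z = None" "c \<in> set Al" "p1 = p(z\<mapsto>c)"
        using p1 unfolding move_def by blast
      obtain z' \<phi>' where z': "length z' = d" "p' z' = None" "sim d (Lf n) (p(z\<mapsto>c)) (p'(z'\<mapsto>c)) \<phi>'"
        using sim_step[OF Suc.prems(1,2,3) L0 L2 zc(1,2) d] by blast
      have "wins_within d Al F n (p'(z'\<mapsto>c)) False"
        using Suc.IH[OF okp_upd[OF Suc.prems(1) zc(1)] okp_upd[OF Suc.prems(2) z'(1)] z'(3)] p1 zc by blast
      moreover have "move d Al p' (p'(z'\<mapsto>c))" using z' zc unfolding move_def by blast
      ultimately show ?thesis using 2 by auto
    qed
  next
    case 3
    have ssym: "sim d (Lf (Suc n)) p' p (inv_into (dom p) \<phi>)"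
      by (rule sim_sym[OF Suc.prems(1,3) L0])
    have "wins_within d Al F n p2 True" if p2: "move d Al p' p2" for p2
    proof (cases "p2 = p'")
      case True
      have "wins_within d Al F n p True" using 3 by (auto simp: move_def)
      then show ?thesis using Suc.IH[OF Suc.prems(1,2) sim_mono[OF Suc.prems(3) LL]] True by blast
    next
      case False
      then obtain z' c where zc: "length z' = d" "p' z' = None" "c \<in> set Al" "p2 = p'(z'\<mapsto>c)"
        using p2 unfolding move_def by blast
      obtain z \<psi>' where z: "length z = d" "p z = None" "sim d (Lf n) (p'(z'\<mapsto>c)) (p(z\<mapsto>c)) \<psi>'"
        using sim_step[OF Suc.prems(2,1) ssym L0 L2 zc(1,2) d] by blast
      have ok1: "okp d (p'(z'\<mapsto>c))" "okp d (p(z\<mapsto>c))" using okp_upd Suc.prems(1,2) z zc by auto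
      have s2: "sim d (Lf n) (p(z\<mapsto>c)) (p'(z'\<mapsto>c)) (inv_into (dom (p'(z'\<mapsto>c))) \<psi>')"
        by (rule sim_sym[OF ok1(1) z(3) L0])
      have "wins_within d Al F n (p(z\<mapsto>c)) True" using 3 z zc unfolding move_def by blast
      then show ?thesis using Suc.IH[OF ok1(2) ok1(1) s2] zc by blast
    qed
    then show ?thesis using 3 by auto
  qed
qed

definition inbox :: "nat \<Rightarrow> int \<Rightarrow> cell \<Rightarrow> bool" where
  "inbox d r x \<longleftrightarrow> length x = d \<and> (\<forall>t<d. \<bar>x!t\<bar> \<le> r)"

fun Wbox :: "nat \<Rightarrow> nat list \<Rightarrow> fpattern list \<Rightarrow> (nat \<Rightarrow> int) \<Rightarrow> nat \<Rightarrow> position \<Rightarrow> bool \<Rightarrow> bool" where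
  "Wbox d Al F rf 0 p a = final d F p"
| "Wbox d Al F rf (Suc n) p a =
    (final d F p \<or>
     (a \<and> (Wbox d Al F rf n p False \<or>
        (\<exists>x c. inbox d (rf (Suc n)) x \<and> p x = None \<and> c \<in> set Al \<and> Wbox d Al F rf n (p(x\<mapsto>c)) False))) \<or>
     (\<not> a \<and> Wbox d Al F rf n p True \<and>
        (\<forall>x c. inbox d (rf (Suc n)) x \<and> p x = None \<and> c \<in> set Al \<longrightarrow> Wbox d Al F rf n (p(x\<mapsto>c)) True)))"

lemma sim_id: "sim d L p p id"
  unfolding sim_def by auto

lemma far_swap:
  assumes "okp d p" "p z = None" "p z' = None" "length z = d" "length z' = d" "0 \<le> L"
    "\<forall>y\<in>dom p. \<not> close d L y z \<and> \<not> close d L y z'"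
  shows "sim d L (p(z\<mapsto>c)) (p(z'\<mapsto>c)) (id(z:=z'))"
  by (rule sim_ext[OF assms(1,1) sim_id assms(6) order_refl assms(2,3,4,5)])
     (use assms(7) close_sym in auto)

lemma box_wins:
  assumes d: "0 < d" and L0: "\<And>k. 0 \<le> Lf k" and L2: "\<And>k. 2 * Lf k \<le> Lf (Suc k)"
    and pc: "\<And>k. pclose d (Lf k) F"
    and r0: "\<And>k. 0 \<le> rf k" and r1: "\<And>k. k < T \<Longrightarrow> rf (Suc (Suc k)) + Lf k + 1 \<le> rf (Suc k)"
  shows "n \<le> T \<Longrightarrow> okp d p \<Longrightarrow> (\<forall>x\<in>dom p. inbox d (rf (Suc n)) x) \<Longrightarrow>
     Wbox d Al F rf n p a \<longleftrightarrow> wins_within d Al F n p a"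
proof (induction n arbitrary: p a)
  case 0
  then show ?case by simp
next
  case (Suc n)
  have nT: "n < T" using Suc.prems by simp
  have rr: "rf (Suc (Suc n)) + Lf n + 1 \<le> rf (Suc n)" using r1[OF nT] .
  have sub: "\<forall>x\<in>dom p. inbox d (rf (Suc n)) x"
    using Suc.prems(3) rr L0[of n] unfolding inbox_def by force
  have IHp: "Wbox d Al F rf n p b \<longleftrightarrow> wins_within d Al F n p b" for b
    using Suc.IH[OF _ Suc.prems(2) sub] nT by simp
  have IHz: "Wbox d Al F rf n (p(x\<mapsto>c)) b \<longleftrightarrow> wins_within d Al F n (p(x\<mapsto>c)) b"
    if x: "inbox d (rf (Suc n)) x" for x c b
  proof -
    have "\<forall>y\<in>dom (p(x\<mapsto>c)). inbox d (rf (Suc n)) y" using sub x by auto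
    moreover have "okp d (p(x\<mapsto>c))" using okp_upd[OF Suc.prems(2)] x unfolding inbox_def by auto
    ultimately show ?thesis using Suc.IH nT by simp
  qed
  define z0 where "z0 = rf (Suc n) # replicate (d - 1) (0::int)"
  have z0: "inbox d (rf (Suc n)) z0" "length z0 = d"
    using d r0[of "Suc n"] by (auto simp: z0_def inbox_def nth_Cons split: nat.splits)
  have farz0: "\<forall>y\<in>dom p. \<not> close d (Lf n) y z0"
  proof (intro ballI notI)
    fix y assume y: "y \<in> dom p" "close d (Lf n) y z0"
    then have "\<bar>y!0 - z0!0\<bar> \<le> Lf n" "\<bar>y!0\<bar> \<le> rf (Suc (Suc n))"
      using d Suc.prems(3) unfolding close_def inbox_def by auto
    then show False using rr by (simp add: z0_def)
  qed
  have pz0: "p z0 = None"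
    using farz0 close_refl[OF L0] by auto
  have farz: "\<forall>y\<in>dom p. \<not> close d (Lf n) y z" if z: "length z = d" "\<not> inbox d (rf (Suc n)) z" for z
  proof (intro ballI notI)
    fix y assume y: "y \<in> dom p" "close d (Lf n) y z"
    obtain t where t: "t < d" "\<bar>z!t\<bar> > rf (Suc n)" using z unfolding inbox_def by force
    have "\<bar>y!t - z!t\<bar> \<le> Lf n" "\<bar>y!t\<bar> \<le> rf (Suc (Suc n))"
      using y t Suc.prems(3) unfolding close_def inbox_def by auto
    then show False using rr t by linarith
  qed
  have swap: "sim d (Lf n) (p(z\<mapsto>c)) (p(z0\<mapsto>c)) (id(z:=z0))" "sim d (Lf n) (p(z0\<mapsto>c)) (p(z\<mapsto>c)) (id(z0:=z))"
    if z: "length z = d" "\<not> inbox d (rf (Suc n)) z" "p z = None" for z c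
    using far_swap[OF Suc.prems(2) z(3) pz0 z(1) z0(2) L0] far_swap[OF Suc.prems(2) pz0 z(3) z0(2) z(1) L0]
      farz[OF z(1,2)] farz0 by auto
  have okz: "okp d (p(z\<mapsto>c))" if "length z = d" for z c using okp_upd[OF Suc.prems(2) that] .
  have SW: "wins_within d Al F n (p(z0\<mapsto>c)) b \<longleftrightarrow> wins_within d Al F n (p(z\<mapsto>c)) b"
    if z: "length z = d" "\<not> inbox d (rf (Suc n)) z" "p z = None" for z c b
    using sim_wins[OF d L0 L2 pc okz[OF z(1)] okz[OF z0(2)] swap(1)[OF z]]
      sim_wins[OF d L0 L2 pc okz[OF z0(2)] okz[OF z(1)] swap(2)[OF z]] by blast
  show ?case
  proof
    assume W: "Wbox d Al F rf (Suc n) p a"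
    show "wins_within d Al F (Suc n) p a"
    proof (cases "final d F p")
      case False
      show ?thesis
      proof (cases a)
        case True
        then consider "Wbox d Al F rf n p False"
          | x c where "inbox d (rf (Suc n)) x" "p x = None" "c \<in> set Al" "Wbox d Al F rf n (p(x\<mapsto>c)) False"
          using W False by auto
        then show ?thesis
        proof cases
          case 1 then show ?thesis using True IHp by (auto simp: move_def)
        next
          case 2
          then have "move d Al p (p(x\<mapsto>c))" unfolding move_def inbox_def by blast
          then show ?thesis using 2 IHz True by auto
        qed
      next
        case na: False
        have "wins_within d Al F n p1 True" if mv: "move d Al p p1" for p1
        proof -
          consider "p1 = p" | z c where "length z = d" "p z = None" "c \<in> set Al" "p1 = p(z\<mapsto>c)"
            using mv unfolding move_def by blast
          then show ?thesis
          proof cases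
            case 1 then show ?thesis using W na False IHp by auto
          next
            case 2
            show ?thesis
            proof (cases "inbox d (rf (Suc n)) z")
              case True then show ?thesis using W na False IHz 2 by auto
            next
              case nb: False
              have "Wbox d Al F rf n (p(z0\<mapsto>c)) True" using W na False z0 pz0 2 by auto
              then have "wins_within d Al F n (p(z0\<mapsto>c)) True" using IHz z0 by blast
              then show ?thesis using SW[OF 2(1) nb 2(2)] 2 by blast
            qed
          qed
        qed
        then show ?thesis using na by auto
      qed
    qed simp
  next
    assume W: "wins_within d Al F (Suc n) p a"
    show "Wbox d Al F rf (Suc n) p a"
    proof (cases "final d F p")
      case False
      show ?thesis
      proof (cases a)
        case True
        then obtain p1 where p1: "move d Al p p1" "wins_within d Al F n p1 False" using W False by auto
        consider "p1 = p" | z c where "length z = d" "p z = None" "c \<in> set Al" "p1 = p(z\<mapsto>c)"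
          using p1 unfolding move_def by blast
        then show ?thesis
        proof cases
          case 1 then show ?thesis using True IHp p1 by auto
        next
          case 2
          show ?thesis
          proof (cases "inbox d (rf (Suc n)) z")
            case ib: True
            have "Wbox d Al F rf n (p(z\<mapsto>c)) False" using IHz[OF ib] 2 p1 by auto
            then show ?thesis using True ib 2 by auto
          next
            case nb: False
            have "wins_within d Al F n (p(z0\<mapsto>c)) False" using SW[OF 2(1) nb 2(2)] 2 p1 by blast
            then have "Wbox d Al F rf n (p(z0\<mapsto>c)) False" using IHz z0 by blast
            then show ?thesis using True z0 pz0 2 by auto
          qed
        qed
      next
        case na: False
        have all: "wins_within d Al F n p1 True" if "move d Al p p1" for p1 using W na False that by auto
        have "Wbox d Al F rf n p True" using all[of p] IHp by (auto simp: move_def)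
        moreover have "Wbox d Al F rf n (p(x\<mapsto>c)) True"
          if "inbox d (rf (Suc n)) x" "p x = None" "c \<in> set Al" for x c
          using all[of "p(x\<mapsto>c)"] IHz[OF that(1)] that unfolding move_def inbox_def by blast
        ultimately show ?thesis using na by auto
      qed
    qed simp
  qed
qed


definition digit :: "nat \<Rightarrow> nat \<Rightarrow> nat \<Rightarrow> nat" where
  "digit b P i = P div b ^ i mod b"

lemma mod_pow_digits: "P mod (b::nat) ^ N = (\<Sum>i<N. digit b P i * b ^ i)"
proof (induction N)
  case 0 then show ?case by simp
next
  case (Suc N)
  have "P mod (b ^ N * b) = b ^ N * (P div b ^ N mod b) + P mod b ^ N"
    by (rule mod_mult2_eq)
  then have "P mod b ^ Suc N = b ^ N * (P div b ^ N mod b) + P mod b ^ N"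
    by (simp add: mult.commute)
  then show ?case using Suc by (simp add: digit_def mult.commute)
qed

lemma digits_repr: "P < (b::nat) ^ N \<Longrightarrow> P = (\<Sum>i<N. digit b P i * b ^ i)"
  using mod_pow_digits[of P b N] by simp

lemma digits_sum_less:
  assumes "0 < (b::nat)" "\<forall>i<N. f i < b"
  shows "(\<Sum>i<N. f i * b ^ i) < b ^ N"
  using assms(2)
proof (induction N)
  case 0 then show ?case by simp
next
  case (Suc N)
  have "(\<Sum>i<Suc N. f i * b ^ i) = (\<Sum>i<N. f i * b ^ i) + f N * b ^ N" by simp
  also have "\<dots> < b ^ N + f N * b ^ N" using Suc by simp
  also have "\<dots> = Suc (f N) * b ^ N" by simp
  also have "\<dots> \<le> b * b ^ N" using Suc.prems by (intro mult_right_mono) auto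
  finally show ?case by simp
qed

lemma digit_sum:
  assumes "0 < (b::nat)" "\<forall>i<N. f i < b" "s < N"
  shows "digit b (\<Sum>i<N. f i * b ^ i) s = f s"
  using assms(2,3)
proof (induction N)
  case 0 then show ?case by simp
next
  case (Suc N)
  have S: "(\<Sum>i<Suc N. f i * b ^ i) = (\<Sum>i<N. f i * b ^ i) + f N * b ^ N" by simp
  show ?case
  proof (cases "s < N")
    case True
    have e: "b ^ N = b ^ s * (b * b ^ (N - Suc s))"
      using True by (simp flip: power_add power_Suc)
    have "(\<Sum>i<Suc N. f i * b ^ i) div b ^ s = (\<Sum>i<N. f i * b ^ i) div b ^ s + f N * (b * b ^ (N - Suc s))"
    proof -
      have "(\<Sum>i<N. f i * b ^ i) + f N * (b ^ s * (b * b ^ (N - Suc s))) = (\<Sum>i<N. f i * b ^ i) + (f N * (b * b ^ (N - Suc s))) * b ^ s"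
        by (simp add: mult_ac)
      then show ?thesis unfolding S e using assms(1) by (simp only: div_mult_self1 power_not_zero) simp
    qed
    then have "digit b (\<Sum>i<Suc N. f i * b ^ i) s = digit b (\<Sum>i<N. f i * b ^ i) s"
    proof -
      have "f N * (b * b ^ (N - Suc s)) = (f N * b ^ (N - Suc s)) * b" by simp
      then show ?thesis unfolding digit_def using \<open>_ = _ div b ^ s + f N * (b * b ^ (N - Suc s))\<close>
        by (simp only: mod_mult_self1)
    qed
    then show ?thesis using Suc True by simp
  next
    case False
    then have sN: "s = N" using Suc by simp
    have lt: "(\<Sum>i<N. f i * b ^ i) < b ^ N" using digits_sum_less assms(1) Suc.prems by auto
    have "(\<Sum>i<Suc N. f i * b ^ i) div b ^ N = f N"
      unfolding S using lt assms(1) by simp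
    then show ?thesis using sN Suc.prems by (simp add: digit_def)
  qed
qed

lemma digit_less: "0 < (b::nat) \<Longrightarrow> digit b P i < b"
  by (simp add: digit_def)

lemma digit_add:
  assumes b: "0 < (b::nat)" and P: "P < b ^ N" and i: "i < N" and z: "digit b P i = 0" and c: "c < b"
  shows "P + c * b ^ i < b ^ N" "s < N \<Longrightarrow> digit b (P + c * b ^ i) s = (if s = i then c else digit b P s)"
proof -
  let ?f = "(\<lambda>k. digit b P k)(i := c)"
  have "(\<Sum>k<N. ?f k * b ^ k) = (\<Sum>k<N. digit b P k * b ^ k) - digit b P i * b ^ i + c * b ^ i"
    using i by (simp add: sum.remove[of "{..<N}" i] )
  also have "\<dots> = P + c * b ^ i" using digits_repr[OF P] z by simp
  finally have eq: "(\<Sum>k<N. ?f k * b ^ k) = P + c * b ^ i" .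
  have fl: "\<forall>k<N. ?f k < b" using digit_less[OF b] c by auto
  show "P + c * b ^ i < b ^ N" using digits_sum_less[OF b fl] eq by simp
  show "s < N \<Longrightarrow> digit b (P + c * b ^ i) s = (if s = i then c else digit b P s)"
    using digit_sum[OF b fl] eq by (metis fun_upd_apply)
qed

definition cell_of :: "nat \<Rightarrow> nat \<Rightarrow> nat \<Rightarrow> cell" where
  "cell_of d R i = map (\<lambda>t. int (digit (2*R+1) i t) - int R) [0..<d]"

definition idx :: "nat \<Rightarrow> nat \<Rightarrow> cell \<Rightarrow> nat" where
  "idx d R x = (\<Sum>t<d. nat (x!t + int R) * (2*R+1) ^ t)"

lemma idx_lt: "inbox d (int R) x \<Longrightarrow> idx d R x < (2*R+1) ^ d"
  unfolding idx_def inbox_def by (intro digits_sum_less) auto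

lemma cell_idx: "inbox d (int R) x \<Longrightarrow> cell_of d R (idx d R x) = x"
proof -
  assume x: "inbox d (int R) x"
  have "t < d \<Longrightarrow> digit (2*R+1) (idx d R x) t = nat (x!t + int R)" for t
    unfolding idx_def using x unfolding inbox_def by (intro digit_sum) auto
  then show ?thesis using x unfolding inbox_def cell_of_def
    by (intro nth_equalityI) auto
qed

lemma idx_cell: "i < (2*R+1) ^ d \<Longrightarrow> idx d R (cell_of d R i) = i"
  unfolding idx_def cell_of_def using digits_repr[of i "2*R+1" d] by simp

lemma inbox_cell: "inbox d (int R) (cell_of d R i)"
proof -
  have h: "digit (2*R+1) i t < 2*R+1" for t by (rule digit_less) simp
  have "\<bar>int (digit (2*R+1) i t) - int R\<bar> \<le> int R" for t using h[of t] by linarith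
  then show ?thesis unfolding inbox_def cell_of_def by simp
qed

lemma inbox_finite: "finite {x. inbox d (int R) x}"
proof -
  have "{x. inbox d (int R) x} \<subseteq> cell_of d R ` {..<(2*R+1)^d}"
    using cell_idx idx_lt by (metis (no_types, lifting) image_eqI lessThan_iff mem_Collect_eq subsetI)
  then show ?thesis by (rule finite_subset) simp
qed

definition posn :: "nat \<Rightarrow> nat \<Rightarrow> nat list \<Rightarrow> nat \<Rightarrow> position" where
  "posn d R Al P x = (if inbox d (int R) x \<and> digit (Suc (length Al)) P (idx d R x) \<noteq> 0
      then Some (Al ! (digit (Suc (length Al)) P (idx d R x) - 1)) else None)"

lemma posn_0: "posn d R Al 0 = Map.empty"
  by (rule ext) (simp add: posn_def digit_def)

lemma okp_posn: "okp d (posn d R Al P)"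
proof -
  have sub: "dom (posn d R Al P) \<subseteq> {x. inbox d (int R) x}" by (auto simp: posn_def split: if_splits)
  have "finite (dom (posn d R Al P))" by (rule finite_subset[OF sub inbox_finite])
  moreover have "\<forall>x\<in>dom (posn d R Al P). length x = d" using sub unfolding inbox_def by auto
  ultimately show ?thesis unfolding okp_def by simp
qed

lemma posn_None: "inbox d (int R) x \<Longrightarrow> posn d R Al P x = None \<longleftrightarrow> digit (Suc (length Al)) P (idx d R x) = 0"
  by (simp add: posn_def)

lemma posn_upd:
  assumes P: "P < Suc (length Al) ^ ((2*R+1)^d)" and i: "i < (2*R+1)^d"
    and z: "digit (Suc (length Al)) P i = 0" and j: "j < length Al"
  shows "posn d R Al (P + Suc j * Suc (length Al) ^ i) = (posn d R Al P)(cell_of d R i \<mapsto> Al ! j)"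
    "P + Suc j * Suc (length Al) ^ i < Suc (length Al) ^ ((2*R+1)^d)"
proof -
  let ?B = "Suc (length Al)"
  have da: "s < (2*R+1)^d \<Longrightarrow> digit ?B (P + Suc j * ?B ^ i) s = (if s = i then Suc j else digit ?B P s)" for s
    using digit_add[of ?B P "(2*R+1)^d" i "Suc j"] P i z j by simp
  show "P + Suc j * ?B ^ i < ?B ^ ((2*R+1)^d)"
    using digit_add[of ?B P "(2*R+1)^d" i "Suc j"] P i z j by simp
  show "posn d R Al (P + Suc j * ?B ^ i) = (posn d R Al P)(cell_of d R i \<mapsto> Al ! j)"
  proof (rule ext)
    fix x
    show "posn d R Al (P + Suc j * ?B ^ i) x = ((posn d R Al P)(cell_of d R i \<mapsto> Al ! j)) x"
    proof (cases "inbox d (int R) x")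
      case True
      have lt: "idx d R x < (2*R+1)^d" using idx_lt[OF True] .
      have eq: "idx d R x = i \<longleftrightarrow> x = cell_of d R i"
        using cell_idx[OF True] idx_cell[OF i] by metis
      show ?thesis using True da[OF lt] eq by (auto simp: posn_def)
    next
      case False
      then have "x \<noteq> cell_of d R i" using inbox_cell by metis
      then show ?thesis using False by (simp add: posn_def)
    qed
  qed
qed

definition mem :: "nat \<Rightarrow> nat \<Rightarrow> bool" where
  "mem Q t \<longleftrightarrow> odd (t div 2 ^ Q)"

lemma mem_sum: "mem Q (\<Sum>P<M. ind (S P) * 2 ^ P) \<longleftrightarrow> Q < M \<and> S Q"
proof -
  have "(\<Sum>P<M. ind (S P) * 2 ^ P) = set_encode {P. P < M \<and> S P}"
  proof -
    have "(\<Sum>P<M. ind (S P) * 2 ^ P) = (\<Sum>P<M. if S P then 2 ^ P else 0)"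
      by (intro sum.cong) (auto simp: ind_def)
    also have "\<dots> = sum ((^) 2) ({..<M} \<inter> {P. S P})" by (simp add: sum.If_cases)
    also have "{..<M} \<inter> {P. S P} = {P. P < M \<and> S P}" by auto
    finally show ?thesis by (simp add: set_encode_def)
  qed
  moreover have "finite {P. P < M \<and> S P}" by simp
  ultimately show ?thesis
    using set_encode_inverse[of "{P. P < M \<and> S P}"] unfolding mem_def set_decode_def by auto
qed

definition stepP :: "(nat \<Rightarrow> bool) \<Rightarrow> (nat \<Rightarrow> nat \<Rightarrow> bool) \<Rightarrow> nat \<Rightarrow> nat \<Rightarrow> nat \<Rightarrow> nat \<Rightarrow> nat \<Rightarrow> nat \<Rightarrow> bool" where
  "stepP fin inb K N T n tb P \<longleftrightarrow> fin P \<or>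
     (if even (T - Suc n)
      then (mem P tb \<or> (\<exists>i<N. inb (Suc n) i \<and> digit (Suc K) P i = 0 \<and> (\<exists>j<K. mem (P + Suc j * Suc K ^ i) tb)))
      else (mem P tb \<and> (\<forall>i<N. inb (Suc n) i \<longrightarrow> digit (Suc K) P i = 0 \<longrightarrow> (\<forall>j<K. mem (P + Suc j * Suc K ^ i) tb))))"

primrec tabN :: "(nat \<Rightarrow> bool) \<Rightarrow> (nat \<Rightarrow> nat \<Rightarrow> bool) \<Rightarrow> nat \<Rightarrow> nat \<Rightarrow> nat \<Rightarrow> nat \<Rightarrow> nat" where
  "tabN fin inb K N T 0 = (\<Sum>P<Suc K ^ N. ind (fin P) * 2 ^ P)"
| "tabN fin inb K N T (Suc n) = (\<Sum>P<Suc K ^ N. ind (stepP fin inb K N T n (tabN fin inb K N T n) P) * 2 ^ P)"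

lemma tab_correct:
  assumes K: "K = length Al" and N: "N = (2*R+1)^d"
    and finH: "\<And>P. P < Suc K ^ N \<Longrightarrow> fin P \<longleftrightarrow> final d F (posn d R Al P)"
    and inbH: "\<And>k i. 1 \<le> k \<Longrightarrow> k \<le> T \<Longrightarrow> i < N \<Longrightarrow> inb k i \<longleftrightarrow> inbox d (rf k) (cell_of d R i)"
    and rfH: "\<And>k. 1 \<le> k \<Longrightarrow> rf k \<le> int R"
  shows "n \<le> T \<Longrightarrow> P < Suc K ^ N \<Longrightarrow> mem P (tabN fin inb K N T n) \<longleftrightarrow> Wbox d Al F rf n (posn d R Al P) (even (T - n))"
proof (induction n arbitrary: P)
  case 0
  then show ?case using finH by (simp add: mem_sum)
next
  case (Suc n)
  define a where "a = even (T - Suc n)"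
  let ?tb = "tabN fin inb K N T n"
  let ?B = "Suc K"
  have tn: "T - n = Suc (T - Suc n)" using Suc.prems by arith
  have na: "even (T - n) \<longleftrightarrow> \<not> a" unfolding a_def tn by (rule even_Suc)
  have nT: "n \<le> T" using Suc.prems by simp
  have IH: "Q < ?B ^ N \<Longrightarrow> mem Q ?tb \<longleftrightarrow> Wbox d Al F rf n (posn d R Al Q) (\<not> a)" for Q
    using Suc.IH[OF nT, of Q] unfolding na .
  have inbox_sub: "inbox d (rf (Suc n)) x \<Longrightarrow> inbox d (int R) x" for x
    using rfH[of "Suc n"] unfolding inbox_def by force
  have ex: "(\<exists>x c. inbox d (rf (Suc n)) x \<and> posn d R Al P x = None \<and> c \<in> set Al \<and> Q ((posn d R Al P)(x\<mapsto>c)))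
     \<longleftrightarrow> (\<exists>i<N. inb (Suc n) i \<and> digit ?B P i = 0 \<and> (\<exists>j<K. Q (posn d R Al (P + Suc j * ?B ^ i))))" for Q
  proof
    assume "\<exists>x c. inbox d (rf (Suc n)) x \<and> posn d R Al P x = None \<and> c \<in> set Al \<and> Q ((posn d R Al P)(x\<mapsto>c))"
    then obtain x c where xc: "inbox d (rf (Suc n)) x" "posn d R Al P x = None" "c \<in> set Al" "Q ((posn d R Al P)(x\<mapsto>c))"
      by blast
    have xb: "inbox d (int R) x" using inbox_sub[OF xc(1)] .
    define i where "i = idx d R x"
    have i: "i < N" "cell_of d R i = x" using idx_lt[OF xb] cell_idx[OF xb] N i_def by auto
    obtain j where j: "j < K" "Al ! j = c" using xc(3) K by (metis in_set_conv_nth)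
    have dz: "digit ?B P i = 0" using posn_None[OF xb] xc(2) K i_def by simp
    have "posn d R Al (P + Suc j * ?B ^ i) = (posn d R Al P)(x \<mapsto> c)"
      using posn_upd(1)[of P Al R d i j] Suc.prems i dz j K N by simp
    then have W: "Q (posn d R Al (P + Suc j * ?B ^ i))" using xc(4) by simp
    have "inb (Suc n) i" using i xc(1) inbH[of "Suc n" i] Suc.prems by auto
    then show "\<exists>i<N. inb (Suc n) i \<and> digit ?B P i = 0 \<and> (\<exists>j<K. Q (posn d R Al (P + Suc j * ?B ^ i)))"
      using i dz j W \<open>inb (Suc n) i\<close> by (intro exI[of _ i] conjI exI[of _ j] impI) auto
  next
    assume "\<exists>i<N. inb (Suc n) i \<and> digit ?B P i = 0 \<and> (\<exists>j<K. Q (posn d R Al (P + Suc j * ?B ^ i)))"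
    then obtain i j where ij: "i < N" "inb (Suc n) i" "digit ?B P i = 0" "j < K" "Q (posn d R Al (P + Suc j * ?B ^ i))"
      by blast
    have e: "posn d R Al (P + Suc j * ?B ^ i) = (posn d R Al P)(cell_of d R i \<mapsto> Al ! j)"
      using posn_upd(1)[of P Al R d i j] Suc.prems ij K N by simp
    have "posn d R Al P (cell_of d R i) = None"
      using posn_None[OF inbox_cell] idx_cell ij K N by simp
    moreover have "inbox d (rf (Suc n)) (cell_of d R i)" using inbH[of "Suc n" i] ij Suc.prems by auto
    moreover have "Al ! j \<in> set Al" using ij K by simp
    moreover have "Q ((posn d R Al P)(cell_of d R i \<mapsto> Al ! j))" using ij(5) e by simp
    ultimately show "\<exists>x c. inbox d (rf (Suc n)) x \<and> posn d R Al P x = None \<and> c \<in> set Al \<and> Q ((posn d R Al P)(x\<mapsto>c))"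
      by (intro exI[of _ "cell_of d R i"] exI[of _ "Al ! j"] conjI)
  qed
  have mv: "mem (P + Suc j * ?B ^ i) ?tb \<longleftrightarrow> Wbox d Al F rf n (posn d R Al (P + Suc j * ?B ^ i)) (\<not> a)"
    if "i < N" "digit ?B P i = 0" "j < K" for i j
    using IH posn_upd[of P Al R d i j] that Suc.prems K N by simp
  have "mem P (tabN fin inb K N T (Suc n)) \<longleftrightarrow> stepP fin inb K N T n ?tb P"
    using Suc.prems by (simp add: mem_sum)
  also have "\<dots> \<longleftrightarrow> Wbox d Al F rf (Suc n) (posn d R Al P) a"
  proof (cases a)
    case True
    have A1: "mem P ?tb \<longleftrightarrow> Wbox d Al F rf n (posn d R Al P) False" using IH[OF Suc.prems(2)] True by simp
    have mvT: "mem (P + Suc j * ?B ^ i) ?tb \<longleftrightarrow> Wbox d Al F rf n (posn d R Al (P + Suc j * ?B ^ i)) False"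
      if "i < N" "digit ?B P i = 0" "j < K" for i j
      using mv[OF that] True by simp
    have A2: "(\<exists>i<N. inb (Suc n) i \<and> digit ?B P i = 0 \<and> (\<exists>j<K. mem (P + Suc j * ?B ^ i) ?tb))
       \<longleftrightarrow> (\<exists>i<N. inb (Suc n) i \<and> digit ?B P i = 0 \<and> (\<exists>j<K. Wbox d Al F rf n (posn d R Al (P + Suc j * ?B ^ i)) False))"
    proof
      assume "\<exists>i<N. inb (Suc n) i \<and> digit ?B P i = 0 \<and> (\<exists>j<K. mem (P + Suc j * ?B ^ i) ?tb)"
      then obtain i j where h: "i<N" "inb (Suc n) i" "digit ?B P i = 0" "j<K" "mem (P + Suc j * ?B ^ i) ?tb" by blast
      have "Wbox d Al F rf n (posn d R Al (P + Suc j * ?B ^ i)) False" using mvT[OF h(1,3,4)] h(5) by (rule iffD1)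
      then show "\<exists>i<N. inb (Suc n) i \<and> digit ?B P i = 0 \<and> (\<exists>j<K. Wbox d Al F rf n (posn d R Al (P + Suc j * ?B ^ i)) False)"
        using h by blast
    next
      assume "\<exists>i<N. inb (Suc n) i \<and> digit ?B P i = 0 \<and> (\<exists>j<K. Wbox d Al F rf n (posn d R Al (P + Suc j * ?B ^ i)) False)"
      then obtain i j where h: "i<N" "inb (Suc n) i" "digit ?B P i = 0" "j<K" "Wbox d Al F rf n (posn d R Al (P + Suc j * ?B ^ i)) False" by blast
      have "mem (P + Suc j * ?B ^ i) ?tb" using mvT[OF h(1,3,4)] h(5) by (rule iffD2)
      then show "\<exists>i<N. inb (Suc n) i \<and> digit ?B P i = 0 \<and> (\<exists>j<K. mem (P + Suc j * ?B ^ i) ?tb)"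
        using h by blast
    qed
    show ?thesis unfolding stepP_def Wbox.simps a_def[symmetric]
      using True A1 A2 ex[of "\<lambda>p. Wbox d Al F rf n p False"] finH[OF Suc.prems(2)] by simp
  next
    case False
    have A1: "mem P ?tb \<longleftrightarrow> Wbox d Al F rf n (posn d R Al P) True" using IH[OF Suc.prems(2)] False by simp
    have mvF: "mem (P + Suc j * ?B ^ i) ?tb \<longleftrightarrow> Wbox d Al F rf n (posn d R Al (P + Suc j * ?B ^ i)) True"
      if "i < N" "digit ?B P i = 0" "j < K" for i j
      using mv[OF that] False by simp
    have A2: "(\<forall>i<N. inb (Suc n) i \<longrightarrow> digit ?B P i = 0 \<longrightarrow> (\<forall>j<K. mem (P + Suc j * ?B ^ i) ?tb))
       \<longleftrightarrow> \<not> (\<exists>i<N. inb (Suc n) i \<and> digit ?B P i = 0 \<and> (\<exists>j<K. \<not> Wbox d Al F rf n (posn d R Al (P + Suc j * ?B ^ i)) True))"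
    proof
      assume h: "\<forall>i<N. inb (Suc n) i \<longrightarrow> digit ?B P i = 0 \<longrightarrow> (\<forall>j<K. mem (P + Suc j * ?B ^ i) ?tb)"
      show "\<not> (\<exists>i<N. inb (Suc n) i \<and> digit ?B P i = 0 \<and> (\<exists>j<K. \<not> Wbox d Al F rf n (posn d R Al (P + Suc j * ?B ^ i)) True))"
      proof
        assume "\<exists>i<N. inb (Suc n) i \<and> digit ?B P i = 0 \<and> (\<exists>j<K. \<not> Wbox d Al F rf n (posn d R Al (P + Suc j * ?B ^ i)) True)"
        then obtain i j where g: "i<N" "inb (Suc n) i" "digit ?B P i = 0" "j<K" "\<not> Wbox d Al F rf n (posn d R Al (P + Suc j * ?B ^ i)) True" by blast
        have "mem (P + Suc j * ?B ^ i) ?tb" using h g by blast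
        then show False using mvF[OF g(1,3,4)] g(5) by blast
      qed
    next
      assume h: "\<not> (\<exists>i<N. inb (Suc n) i \<and> digit ?B P i = 0 \<and> (\<exists>j<K. \<not> Wbox d Al F rf n (posn d R Al (P + Suc j * ?B ^ i)) True))"
      show "\<forall>i<N. inb (Suc n) i \<longrightarrow> digit ?B P i = 0 \<longrightarrow> (\<forall>j<K. mem (P + Suc j * ?B ^ i) ?tb)"
      proof (intro allI impI)
        fix i j assume "i<N" "inb (Suc n) i" "digit ?B P i = 0" "j<K"
        then have "Wbox d Al F rf n (posn d R Al (P + Suc j * ?B ^ i)) True" using h by blast
        then show "mem (P + Suc j * ?B ^ i) ?tb" using mvF[OF \<open>i<N\<close> \<open>digit ?B P i = 0\<close> \<open>j<K\<close>] by blast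
      qed
    qed
    have A3: "(\<forall>x c. inbox d (rf (Suc n)) x \<and> posn d R Al P x = None \<and> c \<in> set Al \<longrightarrow> Wbox d Al F rf n ((posn d R Al P)(x\<mapsto>c)) True)
      \<longleftrightarrow> \<not> (\<exists>x c. inbox d (rf (Suc n)) x \<and> posn d R Al P x = None \<and> c \<in> set Al \<and> \<not> Wbox d Al F rf n ((posn d R Al P)(x\<mapsto>c)) True)"
      by blast
    have A4: "(\<exists>x c. inbox d (rf (Suc n)) x \<and> posn d R Al P x = None \<and> c \<in> set Al \<and> \<not> Wbox d Al F rf n ((posn d R Al P)(x\<mapsto>c)) True)
     \<longleftrightarrow> (\<exists>i<N. inb (Suc n) i \<and> digit ?B P i = 0 \<and> (\<exists>j<K. \<not> Wbox d Al F rf n (posn d R Al (P + Suc j * ?B ^ i)) True))"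
      by (rule ex[of "\<lambda>p. \<not> Wbox d Al F rf n p True"])
    have A2F: "(\<forall>i<N. inb (Suc n) i \<longrightarrow> digit ?B P i = 0 \<longrightarrow> (\<forall>j<K. mem (P + Suc j * ?B ^ i) ?tb))
      \<longleftrightarrow> (\<forall>x c. inbox d (rf (Suc n)) x \<and> posn d R Al P x = None \<and> c \<in> set Al \<longrightarrow> Wbox d Al F rf n ((posn d R Al P)(x\<mapsto>c)) True)"
      by (simp only: A2 A3 A4)
    have fa: "a = False" using False by simp
    show ?thesis unfolding stepP_def Wbox.simps a_def[symmetric]
      by (simp only: A1 A2F finH[OF Suc.prems(2)] fa if_False simp_thms)
  qed
  finally show ?case unfolding a_def .
qed


definition shiftok :: "nat \<Rightarrow> nat \<Rightarrow> nat \<Rightarrow> nat \<Rightarrow> nat \<Rightarrow> nat \<Rightarrow> nat \<Rightarrow> nat \<Rightarrow> bool" where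
  "shiftok R W i t pa na pb nb \<longleftrightarrow> na + pb \<le> digit W i t + pa + nb \<and> digit W i t + pa + nb \<le> 2*R + (na + pb)"

definition shv :: "nat \<Rightarrow> nat \<Rightarrow> nat \<Rightarrow> nat \<Rightarrow> nat \<Rightarrow> nat \<Rightarrow> nat \<Rightarrow> nat" where
  "shv W i t pa na pb nb = digit W i t + pa + nb - (na + pb)"

lemma shift_int:
  assumes "int pa - int na = a" "int pb - int nb = b"
  shows "shiftok R W i t pa na pb nb \<longleftrightarrow> 0 \<le> int (digit W i t) + a - b \<and> int (digit W i t) + a - b \<le> 2 * int R"
    and "shiftok R W i t pa na pb nb \<Longrightarrow> int (shv W i t pa na pb nb) = int (digit W i t) + a - b"
  using assms unfolding shiftok_def shv_def by linarith+

definition tgt :: "nat \<Rightarrow> nat \<Rightarrow> nat \<Rightarrow> (nat \<Rightarrow> nat) \<Rightarrow> (nat \<Rightarrow> nat) \<Rightarrow> (nat \<Rightarrow> nat) \<Rightarrow> (nat \<Rightarrow> nat) \<Rightarrow> nat" where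
  "tgt d R i pa na pb nb = (\<Sum>t<d. shv (2*R+1) i t (pa t) (na t) (pb t) (nb t) * (2*R+1) ^ t)"

definition condk :: "nat \<Rightarrow> nat \<Rightarrow> nat \<Rightarrow> (nat \<Rightarrow> nat) \<Rightarrow> nat \<Rightarrow> nat \<Rightarrow> (nat \<Rightarrow> nat) \<Rightarrow> (nat \<Rightarrow> nat) \<Rightarrow> (nat \<Rightarrow> nat) \<Rightarrow> (nat \<Rightarrow> nat) \<Rightarrow> nat \<Rightarrow> bool" where
  "condk d R K alook P i pa na pb nb c \<longleftrightarrow>
     (\<forall>t<d. shiftok R (2*R+1) i t (pa t) (na t) (pb t) (nb t)) \<and>
     digit (Suc K) P (tgt d R i pa na pb nb) \<noteq> 0 \<and>
     alook (digit (Suc K) P (tgt d R i pa na pb nb) - 1) = c"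

lemma lenq: "\<forall>(j,c)\<in>set q. length j = d \<Longrightarrow> k < length q \<Longrightarrow> length (fst (q!k)) = d"
proof -
  assume a: "\<forall>(j,c)\<in>set q. length j = d" and k: "k < length q"
  obtain j c where "q!k = (j,c)" by fastforce
  moreover have "q!k \<in> set q" using k by simp
  ultimately show ?thesis using a by auto
qed

lemma appears_num:
  assumes len: "\<forall>(j,c)\<in>set q. length j = d" and K: "K = length Al" and al: "\<forall>j<K. alook j = Al ! j"
    and acc: "\<And>k t. k < length q \<Longrightarrow> t < d \<Longrightarrow> pp k t = nat (fst (q!k) ! t) \<and> nn k t = nat (- (fst (q!k) ! t))"
    and col: "\<And>k. k < length q \<Longrightarrow> cl k = snd (q!k)"
    and q: "q \<noteq> []"
  shows "appears d q (posn d R Al P) \<longleftrightarrow>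
    (\<exists>i<(2*R+1)^d. \<forall>k<length q. condk d R K alook P i (pp k) (nn k) (pp 0) (nn 0) (cl k))"
proof
  have acci: "int (pp k t) - int (nn k t) = fst (q!k) ! t" if "k < length q" "t < d" for k t
    using acc[OF that] by simp
  have l0: "length (fst (q!0)) = d" using lenq[OF len, of 0] q by simp
  have q0: "0 < length q" using q by simp
  assume "appears d q (posn d R Al P)"
  then obtain v where v: "length v = d" "\<forall>(j, c)\<in>set q. posn d R Al P (vadd v j) = Some c"
    unfolding appears_def by blast
  define x0 where "x0 = vadd v (fst (q!0))"
  have "q!0 \<in> set q" using q by simp
  then have "case q!0 of (j, c) \<Rightarrow> posn d R Al P (vadd v j) = Some c" by (rule bspec[OF v(2)])
  then have "posn d R Al P x0 = Some (snd (q!0))" unfolding x0_def by (simp add: case_prod_beta)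
  then have bx0: "inbox d (int R) x0" by (simp add: posn_def split: if_splits)
  define i where "i = idx d R x0"
  have i: "i < (2*R+1)^d" using idx_lt[OF bx0] i_def by simp
  have di: "int (digit (2*R+1) i t) = x0!t + int R" if "t < d" for t
  proof -
    have "digit (2*R+1) i t = nat (x0!t + int R)"
      unfolding i_def idx_def using bx0 that unfolding inbox_def by (intro digit_sum) auto
    moreover have "\<bar>x0!t\<bar> \<le> int R" using bx0 that unfolding inbox_def by auto
    then have "0 \<le> x0!t + int R" by linarith
    ultimately show ?thesis by simp
  qed
  show "\<exists>i<(2*R+1)^d. \<forall>k<length q. condk d R K alook P i (pp k) (nn k) (pp 0) (nn 0) (cl k)"
  proof (intro exI[of _ i] conjI allI impI i)
    fix k assume k: "k < length q"
    have lk: "length (fst (q!k)) = d" using lenq[OF len k] .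
    define x where "x = vadd v (fst (q!k))"
    have "q!k \<in> set q" using k by simp
    then have "case q!k of (j, c) \<Rightarrow> posn d R Al P (vadd v j) = Some c" by (rule bspec[OF v(2)])
    then have px: "posn d R Al P x = Some (snd (q!k))" unfolding x_def by (simp add: case_prod_beta)
    then have bx: "inbox d (int R) x" and dnz: "digit (Suc (length Al)) P (idx d R x) \<noteq> 0"
      and dcol: "Al ! (digit (Suc (length Al)) P (idx d R x) - 1) = snd (q!k)"
      by (auto simp: posn_def split: if_splits)
    have xt: "x!t = v!t + fst (q!k) ! t" "x0!t = v!t + fst (q!0) ! t" if "t < d" for t
      using that v lk l0 by (auto simp: x_def x0_def nth_vadd)
    have val: "int (digit (2*R+1) i t) + fst (q!k) ! t - fst (q!0) ! t = x!t + int R" if "t < d" for t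
      using di[OF that] xt[OF that] by simp
    have sok: "\<forall>t<d. shiftok R (2*R+1) i t (pp k t) (nn k t) (pp 0 t) (nn 0 t)"
    proof (intro allI impI)
      fix t assume t: "t < d"
      have "\<bar>x!t\<bar> \<le> int R" using bx t unfolding inbox_def by auto
      then show "shiftok R (2*R+1) i t (pp k t) (nn k t) (pp 0 t) (nn 0 t)"
      proof -
        have q0: "0 < length q" using q by simp
        have "0 \<le> int (digit (2*R+1) i t) + fst (q!k) ! t - fst (q!0) ! t \<and> int (digit (2*R+1) i t) + fst (q!k) ! t - fst (q!0) ! t \<le> 2 * int R"
          using val[OF t] \<open>\<bar>x!t\<bar> \<le> int R\<close> by linarith
        then show ?thesis using shift_int(1)[OF acci[OF k t] acci[OF q0 t], of R "2*R+1" i t] by blast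
      qed
    qed
    have "tgt d R i (pp k) (nn k) (pp 0) (nn 0) = idx d R x"
      unfolding tgt_def idx_def
    proof (intro sum.cong refl)
      fix t assume "t \<in> {..<d}"
      then have t: "t < d" by simp
      have "int (shv (2*R+1) i t (pp k t) (nn k t) (pp 0 t) (nn 0 t)) = x!t + int R"
        using shift_int(2)[OF acci[OF k t] acci[OF q0 t], of R "2*R+1" i t] sok t val[OF t] by simp
      then show "shv (2*R+1) i t (pp k t) (nn k t) (pp 0 t) (nn 0 t) * (2*R+1) ^ t = nat (x!t + int R) * (2*R+1) ^ t"
        by simp
    qed
    moreover have "digit (Suc K) P (idx d R x) - 1 < K"
      using digit_less[of "Suc K" P "idx d R x"] dnz K by simp
    ultimately show "condk d R K alook P i (pp k) (nn k) (pp 0) (nn 0) (cl k)"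
      unfolding condk_def using sok dnz dcol al K col[OF k] by simp
  qed
next
  have acci: "int (pp k t) - int (nn k t) = fst (q!k) ! t" if "k < length q" "t < d" for k t
    using acc[OF that] by simp
  have l0: "length (fst (q!0)) = d" using lenq[OF len, of 0] q by simp
  have q0: "0 < length q" using q by simp
  assume "\<exists>i<(2*R+1)^d. \<forall>k<length q. condk d R K alook P i (pp k) (nn k) (pp 0) (nn 0) (cl k)"
  then obtain i where i: "i < (2*R+1)^d" "\<forall>k<length q. condk d R K alook P i (pp k) (nn k) (pp 0) (nn 0) (cl k)"
    by blast
  define v where "v = map (\<lambda>t. int (digit (2*R+1) i t) - int R - fst (q!0) ! t) [0..<d]"
  show "appears d q (posn d R Al P)" unfolding appears_def
  proof (intro exI[of _ v] conjI ballI)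
    show "length v = d" by (simp add: v_def)
  next
    fix jc assume "jc \<in> set q"
    then obtain k where k: "k < length q" "q!k = jc" by (auto simp: in_set_conv_nth)
    obtain j c where jc: "jc = (j, c)" by fastforce
    have lj: "length j = d" using lenq[OF len k(1)] k jc by simp
    have ck: "condk d R K alook P i (pp k) (nn k) (pp 0) (nn 0) (cl k)" using i k by blast
    have jk: "fst (q!k) = j" "snd (q!k) = c" using k jc by auto
    define x where "x = vadd v j"
    have xt: "x!t = int (digit (2*R+1) i t) - int R - fst (q!0) ! t + j!t" if "t < d" for t
      using that lj by (simp add: x_def v_def nth_vadd)
    have lx: "length x = d" using lj by (simp add: x_def v_def length_vadd)
    have sok: "shiftok R (2*R+1) i t (pp k t) (nn k t) (pp 0 t) (nn 0 t)" if "t < d" for t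
      using ck that unfolding condk_def by blast
    have bnd: "0 \<le> x!t + int R \<and> x!t + int R \<le> 2 * int R" if t: "t < d" for t
    proof -
      have q0: "0 < length q" using q by simp
      have "0 \<le> int (digit (2*R+1) i t) + fst (q!k) ! t - fst (q!0) ! t \<and> int (digit (2*R+1) i t) + fst (q!k) ! t - fst (q!0) ! t \<le> 2 * int R"
        using shift_int(1)[OF acci[OF k(1) t] acci[OF q0 t], of R "2*R+1" i t] sok[OF t] by blast
      then show ?thesis using xt[OF t] jk by simp
    qed
    have bx: "inbox d (int R) x" unfolding inbox_def using lx bnd by force
    have "tgt d R i (pp k) (nn k) (pp 0) (nn 0) = idx d R x"
      unfolding tgt_def idx_def
    proof (intro sum.cong refl)
      fix t assume "t \<in> {..<d}"
      then have t: "t < d" by simp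
      have "int (shv (2*R+1) i t (pp k t) (nn k t) (pp 0 t) (nn 0 t)) = x!t + int R"
        using shift_int(2)[OF acci[OF k(1) t] acci[OF q0 t], of R "2*R+1" i t] sok[OF t] xt[OF t] jk by simp
      then show "shv (2*R+1) i t (pp k t) (nn k t) (pp 0 t) (nn 0 t) * (2*R+1) ^ t = nat (x!t + int R) * (2*R+1) ^ t"
        by simp
    qed
    then have tg: "digit (Suc K) P (idx d R x) \<noteq> 0" "alook (digit (Suc K) P (idx d R x) - 1) = cl k"
      using ck unfolding condk_def by auto
    have "digit (Suc K) P (idx d R x) - 1 < K"
      using digit_less[of "Suc K" P "idx d R x"] tg(1) by simp
    then have "posn d R Al P x = Some c" using bx tg al K col[OF k(1)] jk by (simp add: posn_def)
    then show "case jc of (j, c) \<Rightarrow> posn d R Al P (vadd v j) = Some c" using jc x_def by simp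
  qed
qed

definition finG :: "nat \<Rightarrow> nat \<Rightarrow> nat \<Rightarrow> (nat \<Rightarrow> nat) \<Rightarrow> nat \<Rightarrow> (nat \<Rightarrow> nat) \<Rightarrow> (nat \<Rightarrow> nat \<Rightarrow> nat \<Rightarrow> nat)
   \<Rightarrow> (nat \<Rightarrow> nat \<Rightarrow> nat \<Rightarrow> nat) \<Rightarrow> (nat \<Rightarrow> nat \<Rightarrow> nat) \<Rightarrow> nat \<Rightarrow> bool" where
  "finG d R K alook np plen pp nn col P \<longleftrightarrow>
    (\<exists>e<np. plen e = 0 \<or> (\<exists>i<(2*R+1)^d. \<forall>k<plen e. condk d R K alook P i (pp e k) (nn e k) (pp e 0) (nn e 0) (col e k)))"

lemma bex_set_nth: "(\<exists>x\<in>set xs. P x) \<longleftrightarrow> (\<exists>i<length xs. P (xs!i))"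
  by (auto simp add: set_conv_nth)

lemma finG_correct:
  assumes len: "\<forall>q\<in>set F. \<forall>(j,c)\<in>set q. length j = d" and K: "K = length Al" and al: "\<forall>j<K. alook j = Al ! j"
    and np: "np = length F" and pl: "\<And>e. e < length F \<Longrightarrow> plen e = length (F!e)"
    and acc: "\<And>e k t. e < length F \<Longrightarrow> k < length (F!e) \<Longrightarrow> t < d \<Longrightarrow>
        pp e k t = nat (fst (F!e!k) ! t) \<and> nn e k t = nat (- (fst (F!e!k) ! t))"
    and col: "\<And>e k. e < length F \<Longrightarrow> k < length (F!e) \<Longrightarrow> cl e k = snd (F!e!k)"
  shows "finG d R K alook np plen pp nn cl P \<longleftrightarrow> final d F (posn d R Al P)"
proof -
  have "final d F (posn d R Al P) \<longleftrightarrow> (\<exists>e<length F. appears d (F!e) (posn d R Al P))"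
    unfolding final_def by (rule bex_set_nth)
  also have "\<dots> \<longleftrightarrow> (\<exists>e<np. plen e = 0 \<or> (\<exists>i<(2*R+1)^d. \<forall>k<plen e. condk d R K alook P i (pp e k) (nn e k) (pp e 0) (nn e 0) (cl e k)))"
  proof -
    have per: "appears d (F!e) (posn d R Al P) \<longleftrightarrow> (plen e = 0 \<or> (\<exists>i<(2*R+1)^d. \<forall>k<plen e. condk d R K alook P i (pp e k) (nn e k) (pp e 0) (nn e 0) (cl e k)))"
      if e: "e < length F" for e
    proof (cases "F!e = []")
      case True
      have "appears d (F!e) (posn d R Al P)" using True unfolding appears_def
        by (intro exI[of _ "replicate d 0"]) simp
      then show ?thesis using True pl[OF e] by simp
    next
      case False
      have l: "\<forall>(j,c)\<in>set (F!e). length j = d" by (rule bspec[OF len nth_mem[OF e]])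
      show ?thesis
        using appears_num[OF l K al, of "pp e" "nn e" "cl e" R P] acc[OF e] col[OF e] False pl[OF e] by simp
    qed
    show ?thesis
    proof
      assume "\<exists>e<length F. appears d (F!e) (posn d R Al P)"
      then obtain e where "e < length F" "appears d (F!e) (posn d R Al P)" by blast
      then show "\<exists>e<np. plen e = 0 \<or> (\<exists>i<(2*R+1)^d. \<forall>k<plen e. condk d R K alook P i (pp e k) (nn e k) (pp e 0) (nn e 0) (cl e k))"
        using per np by blast
    next
      assume "\<exists>e<np. plen e = 0 \<or> (\<exists>i<(2*R+1)^d. \<forall>k<plen e. condk d R K alook P i (pp e k) (nn e k) (pp e 0) (nn e 0) (cl e k))"
      then obtain e where "e < np" "plen e = 0 \<or> (\<exists>i<(2*R+1)^d. \<forall>k<plen e. condk d R K alook P i (pp e k) (nn e k) (pp e 0) (nn e 0) (cl e k))" by blast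
      then show "\<exists>e<length F. appears d (F!e) (posn d R Al P)"
        using per np by blast
    qed
  qed
  finally show ?thesis unfolding finG_def by simp
qed


definition Gc :: "nat \<Rightarrow> nat \<Rightarrow> nat" where "Gc Fc T = (2*Fc+1)*2^T + 1"
definition Rc :: "nat \<Rightarrow> nat \<Rightarrow> nat" where "Rc Fc T = T * Gc Fc T"

definition inbC :: "nat \<Rightarrow> nat \<Rightarrow> nat \<Rightarrow> nat \<Rightarrow> nat \<Rightarrow> bool" where
  "inbC d Fc T k i \<longleftrightarrow> (\<forall>t<d. Rc Fc T \<le> digit (2 * Rc Fc T + 1) i t + (T + 1 - k) * Gc Fc T \<and>
       digit (2 * Rc Fc T + 1) i t \<le> Rc Fc T + (T + 1 - k) * Gc Fc T)"

definition finC :: "nat \<Rightarrow> nat \<Rightarrow> nat \<Rightarrow> nat \<Rightarrow> nat \<Rightarrow> bool" where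
  "finC d Ac Fc T P = finG d (Rc Fc T) (lenc Ac) (\<lambda>j. nthc Ac j) (lenc Fc) (\<lambda>e. lenc (nthc Fc e))
     (\<lambda>e k t. ip (nthc (fstd (nthc (nthc Fc e) k)) t)) (\<lambda>e k t. inn (nthc (fstd (nthc (nthc Fc e) k)) t))
     (\<lambda>e k. sndd (nthc (nthc Fc e) k)) P"

definition wfC :: "nat \<Rightarrow> nat \<Rightarrow> bool" where
  "wfC d Fc \<longleftrightarrow> (\<forall>e<lenc Fc. \<forall>k<lenc (nthc Fc e). lenc (fstd (nthc (nthc Fc e) k)) = d \<and>
      (\<forall>k'<k. fstd (nthc (nthc Fc e) k') \<noteq> fstd (nthc (nthc Fc e) k)))"

definition winC :: "nat \<Rightarrow> nat \<Rightarrow> nat \<Rightarrow> nat \<Rightarrow> bool" where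
  "winC d Ac Fc T \<longleftrightarrow> mem 0 (tabN (finC d Ac Fc T) (inbC d Fc T) (lenc Ac) ((2 * Rc Fc T + 1) ^ d) T T)"

definition dec :: "nat \<Rightarrow> nat \<Rightarrow> nat" where
  "dec d c = ind (wfC d (fstd (sndd c)) \<and> winC d (fstd c) (fstd (sndd c)) (sndd (sndd c)))"

definition pel :: "cell \<times> nat \<Rightarrow> nat" where
  "pel = (\<lambda>(v, c). prod_encode (encode_cell v, c))"

lemma encode_fpattern_pel: "encode_fpattern q = list_encode (map pel q)"
  by (simp add: encode_fpattern_def pel_def)

lemma encode_cell_inj: "encode_cell v = encode_cell w \<longleftrightarrow> v = w"
  unfolding encode_cell_def using list_encode_eq inj_int_encode
  by (metis inj_map_eq_map)

lemma acc_pat1: "lenc (list_encode (map encode_fpattern F)) = length F"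
  by (simp add: lenc_enc)
lemma acc_pat2: "e < length F \<Longrightarrow> nthc (list_encode (map encode_fpattern F)) e = encode_fpattern (F!e)"
  by (simp add: nthc_enc)
lemma acc_pat3: "lenc (encode_fpattern q) = length q"
  by (simp add: lenc_enc encode_fpattern_pel)
lemma acc_pat4: "k < length q \<Longrightarrow> fstd (nthc (encode_fpattern q) k) = encode_cell (fst (q!k))"
  by (simp add: nthc_enc encode_fpattern_pel pel_def case_prod_beta)
lemma acc_pat5: "k < length q \<Longrightarrow> sndd (nthc (encode_fpattern q) k) = snd (q!k)"
  by (simp add: nthc_enc encode_fpattern_pel pel_def case_prod_beta)
lemmas acc_pat = acc_pat1 acc_pat2 acc_pat3 acc_pat4 acc_pat5

lemma acc_cell:
  "lenc (encode_cell j) = length j"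
  "t < length j \<Longrightarrow> nthc (encode_cell j) t = int_encode (j!t)"
  by (simp_all add: encode_cell_def lenc_enc nthc_enc)

lemma wfC_correct:
  "wfC d (list_encode (map encode_fpattern F)) \<longleftrightarrow> (\<forall>q\<in>set F. wf_fpattern d q)"
proof -
  have "wfC d (list_encode (map encode_fpattern F)) \<longleftrightarrow>
     (\<forall>e<length F. \<forall>k<length (F!e). length (fst (F!e!k)) = d \<and> (\<forall>k'<k. fst (F!e!k') \<noteq> fst (F!e!k)))"
    unfolding wfC_def by (simp add: acc_pat acc_cell encode_cell_inj cong: conj_cong)
  also have "\<dots> \<longleftrightarrow> (\<forall>q\<in>set F. wf_fpattern d q)"
  proof -
    have "wf_fpattern d q \<longleftrightarrow> (\<forall>k<length q. length (fst (q!k)) = d \<and> (\<forall>k'<k. fst (q!k') \<noteq> fst (q!k)))" for q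
    proof -
      have "(\<forall>(j, c)\<in>set q. length j = d) \<longleftrightarrow> (\<forall>k<length q. length (fst (q!k)) = d)"
        by (auto simp: all_set_conv_all_nth case_prod_beta)
      moreover have "distinct (map fst q) \<longleftrightarrow> (\<forall>k<length q. \<forall>k'<k. fst (q!k') \<noteq> fst (q!k))"
        unfolding distinct_conv_nth by (auto, metis nat_neq_iff)
      ultimately show ?thesis unfolding wf_fpattern_def by blast
    qed
    then show ?thesis by (simp add: all_set_conv_all_nth)
  qed
  finally show ?thesis .
qed

lemma abs_le_int_encode: "\<bar>z\<bar> \<le> int (int_encode z)"
  by (simp add: int_encode_def sum_encode_def)

lemma coord_bound:
  assumes "q \<in> set F" "(j, c) \<in> set q" "t < length j"
  shows "\<bar>j!t\<bar> \<le> int (list_encode (map encode_fpattern F))"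
proof -
  have "int_encode (j!t) < encode_cell j" unfolding encode_cell_def
    using assms(3) by (intro member_lt_encode) simp
  also have "encode_cell j \<le> pel (j, c)" by (simp add: pel_def le_prod_encode_1)
  also have "pel (j, c) < encode_fpattern q" unfolding encode_fpattern_pel
    using assms(2) by (intro member_lt_encode) simp
  also have "encode_fpattern q < list_encode (map encode_fpattern F)"
    using assms(1) by (intro member_lt_encode) simp
  finally show ?thesis using abs_le_int_encode[of "j!t"] by linarith
qed

lemma winC_correct:
  assumes d: "0 < d" and wf: "\<forall>q\<in>set F. wf_fpattern d q"
  shows "winC d (list_encode Al) (list_encode (map encode_fpattern F)) T \<longleftrightarrow> A_wins_in d Al F T"
proof -
  define Fc where "Fc = list_encode (map encode_fpattern F)"
  define Ac where "Ac = list_encode Al"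
  define G where "G = Gc Fc T"
  define R where "R = Rc Fc T"
  define Lf where "Lf = (\<lambda>k. int ((2*Fc+1)*2^k))"
  define rf where "rf = (\<lambda>k. int ((T + 1 - k) * G))"
  have RG: "R = T * G" by (simp add: R_def G_def Rc_def)
  have len: "\<forall>q\<in>set F. \<forall>(j,c)\<in>set q. length j = d" using wf unfolding wf_fpattern_def by blast
  have L0: "0 \<le> Lf k" for k by (simp add: Lf_def)
  have L2: "2 * Lf k \<le> Lf (Suc k)" for k by (simp add: Lf_def)
  have pc: "pclose d (Lf k) F" for k
    unfolding pclose_def
  proof (rule ballI, rule conjI)
    fix q assume q: "q \<in> set F"
    show "\<forall>(j,c)\<in>set q. length j = d" using len q by blast
    have H: "close d (Lf k) (fst jc) (fst jc')" if jc: "jc \<in> set q" "jc' \<in> set q" for jc jc'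
    proof -
      obtain j c j' c' where e: "jc = (j, c)" "jc' = (j', c')" by fastforce
      have lj: "length j = d" "length j' = d" using len q jc e by fastforce+
      have "close d (Lf k) j j'" unfolding close_def
      proof (intro allI impI)
        fix t assume t: "t < d"
        have "\<bar>j!t\<bar> \<le> int Fc" "\<bar>j'!t\<bar> \<le> int Fc"
          using coord_bound[OF q, of j c t] coord_bound[OF q, of j' c' t] jc e lj t Fc_def by auto
        moreover have "2 * int Fc \<le> Lf k"
        proof -
          have "(2*Fc+1) * 1 \<le> (2*Fc+1)*2^k" by (intro mult_left_mono) auto
          then have "2*Fc \<le> (2*Fc+1)*2^k" by (rule order_trans[rotated]) simp
          then have "int (2*Fc) \<le> int ((2*Fc+1)*2^k)" by (simp only: of_nat_le_iff)
          then show ?thesis unfolding Lf_def by simp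
        qed
        ultimately show "\<bar>j!t - j'!t\<bar> \<le> Lf k" by linarith
      qed
      then show ?thesis using e by simp
    qed
    show "\<forall>(j,c)\<in>set q. \<forall>(j',c')\<in>set q. close d (Lf k) j j'"
      using H by (simp add: case_prod_beta)
  qed
  have r0: "0 \<le> rf k" for k by (simp add: rf_def)
  have r1: "rf (Suc (Suc k)) + Lf k + 1 \<le> rf (Suc k)" if k: "k < T" for k
  proof -
    have "2^k \<le> (2::nat)^T" using k by (intro power_increasing) auto
    then have "(2*Fc+1)*2^k \<le> (2*Fc+1)*2^T" by (intro mult_left_mono) auto
    then have g: "(2*Fc+1)*2^k + 1 \<le> G" by (simp add: G_def Gc_def)
    have "T + 1 - Suc k = Suc (T + 1 - Suc (Suc k))" using k by simp
    then have "(T + 1 - Suc k) * G = (T + 1 - Suc (Suc k)) * G + G" by simp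
    then show ?thesis using g unfolding rf_def Lf_def by linarith
  qed
  have bw: "Wbox d Al F rf T Map.empty True \<longleftrightarrow> wins_within d Al F T Map.empty True"
    using box_wins[where d=d and Lf=Lf and F=F and rf=rf and T=T and n=T and p=Map.empty and Al=Al and a=True,
        OF d L0 L2 pc r0 r1] by (simp add: okp_def)
  have K: "lenc Ac = length Al" by (simp add: Ac_def lenc_enc)
  have finH: "finC d Ac Fc T P \<longleftrightarrow> final d F (posn d R Al P)" for P
    unfolding finC_def R_def[symmetric]
  proof (rule finG_correct[OF len K])
    show "\<forall>j<lenc Ac. nthc Ac j = Al ! j" using K by (simp add: Ac_def nthc_enc)
    show "lenc Fc = length F" by (simp add: Fc_def acc_pat)
    show "\<And>e. e < length F \<Longrightarrow> lenc (nthc Fc e) = length (F ! e)" by (simp add: Fc_def acc_pat)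
    show "\<And>e k. e < length F \<Longrightarrow> k < length (F ! e) \<Longrightarrow> sndd (nthc (nthc Fc e) k) = snd (F ! e ! k)"
      by (simp add: Fc_def acc_pat)
    fix e k t assume ekt: "e < length F" "k < length (F!e)" "t < d"
    have "length (fst (F!e!k)) = d" using lenq[OF bspec[OF len nth_mem[OF ekt(1)]] ekt(2)] .
    then have "nthc (fstd (nthc (nthc Fc e) k)) t = int_encode (fst (F!e!k) ! t)"
      using ekt by (simp add: Fc_def acc_pat acc_cell)
    then show "ip (nthc (fstd (nthc (nthc Fc e) k)) t) = nat (fst (F ! e ! k) ! t) \<and>
         inn (nthc (fstd (nthc (nthc Fc e) k)) t) = nat (- fst (F ! e ! k) ! t)"
      by (simp add: ip_enc inn_enc)
  qed
  have inbH: "inbC d Fc T k i \<longleftrightarrow> inbox d (rf k) (cell_of d R i)" if "1 \<le> k" for k i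
  proof -
    have "inbox d (rf k) (cell_of d R i) \<longleftrightarrow> (\<forall>t<d. \<bar>int (digit (2*R+1) i t) - int R\<bar> \<le> rf k)"
      unfolding inbox_def cell_of_def by simp
    also have "\<dots> \<longleftrightarrow> inbC d Fc T k i"
      unfolding inbC_def R_def[symmetric] G_def[symmetric] rf_def by (intro all_cong) linarith
    finally show ?thesis by simp
  qed
  have rfH: "rf k \<le> int R" if "1 \<le> k" for k
  proof -
    have "(T + 1 - k) * G \<le> T * G" using that by (intro mult_right_mono) auto
    then show ?thesis unfolding rf_def RG by linarith
  qed
  have tc: "mem 0 (tabN (finC d Ac Fc T) (inbC d Fc T) (lenc Ac) ((2*R+1)^d) T T) \<longleftrightarrow>
      Wbox d Al F rf T (posn d R Al 0) (even (T - T))"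
    by (rule tab_correct[OF K refl finH inbH rfH]) auto
  show ?thesis
    using tc bw unfolding winC_def A_wins_in_def posn_0 R_def Fc_def Ac_def by simp
qed

lemma dec_enc:
  assumes d: "0 < d"
  shows "dec d (encode_instance Al F T) = ind ((\<forall>q\<in>set F. wf_fpattern d q) \<and> A_wins_in d Al F T)"
proof -
  have "(wfC d (list_encode (map encode_fpattern F)) \<and> winC d (list_encode Al) (list_encode (map encode_fpattern F)) T)
     \<longleftrightarrow> ((\<forall>q\<in>set F. wf_fpattern d q) \<and> A_wins_in d Al F T)"
    using wfC_correct[of d F] winC_correct[OF d, of F Al T] by blast
  then show ?thesis unfolding dec_def encode_instance_def by simp
qed

definition decF :: "nat \<Rightarrow> fpattern" where
  "decF n = map (\<lambda>e. (map int_decode (list_decode (fstd e)), sndd e)) (list_decode n)"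

lemma encode_decF: "encode_fpattern (decF n) = n"
proof -
  have "map pel (decF n) = list_decode n"
    unfolding decF_def pel_def encode_cell_def by (simp add: o_def fstd_sndd map_idI)
  then show ?thesis by (simp add: encode_fpattern_pel)
qed

lemma encode_instance_surj: "\<exists>Al F T. c = encode_instance Al F T"
proof (intro exI)
  let ?F = "map decF (list_decode (fstd (sndd c)))"
  have "map encode_fpattern ?F = list_decode (fstd (sndd c))" by (simp add: o_def encode_decF)
  then show "c = encode_instance (list_decode (fstd c)) ?F (sndd (sndd c))"
    unfolding encode_instance_def by (simp add: fstd_sndd)
qed

lemma dec_correct:
  assumes d: "0 < d"
  shows "dec d c = (if domino_problem d c then 1 else 0)"
proof -
  obtain Al F T where c: "c = encode_instance Al F T" using encode_instance_surj by blast
  have "domino_problem d c \<longleftrightarrow> (\<forall>q\<in>set F. wf_fpattern d q) \<and> A_wins_in d Al F T"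
  proof
    assume "domino_problem d c"
    then obtain Al' F' T' where h: "c = encode_instance Al' F' T'" "\<forall>q\<in>set F'. wf_fpattern d q" "A_wins_in d Al' F' T'"
      unfolding domino_problem_def by blast
    have "dec d c = ind ((\<forall>q\<in>set F'. wf_fpattern d q) \<and> A_wins_in d Al' F' T')"
      using dec_enc[OF d, of Al' F' T'] h(1) by (simp only:)
    then have d1: "dec d c = 1" using h(2,3) by (simp add: ind_def)
    have "dec d c = ind ((\<forall>q\<in>set F. wf_fpattern d q) \<and> A_wins_in d Al F T)"
      using dec_enc[OF d, of Al F T] c by (simp only:)
    then have "ind ((\<forall>q\<in>set F. wf_fpattern d q) \<and> A_wins_in d Al F T) = 1" using d1 by (simp only:)
    then show "(\<forall>q\<in>set F. wf_fpattern d q) \<and> A_wins_in d Al F T"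
      unfolding ind_def by (simp split: if_splits)
  next
    assume "(\<forall>q\<in>set F. wf_fpattern d q) \<and> A_wins_in d Al F T"
    then show "domino_problem d c" unfolding domino_problem_def using c by blast
  qed
  moreover have "dec d c = ind ((\<forall>q\<in>set F. wf_fpattern d q) \<and> A_wins_in d Al F T)"
    using dec_enc[OF d, of Al F T] c by (simp only:)
  ultimately show ?thesis by (simp add: ind_def)
qed


lemma comp3: "rcomp 3 G \<Longrightarrow> rcomp n A \<Longrightarrow> rcomp n B \<Longrightarrow> rcomp n C \<Longrightarrow> rcomp n (\<lambda>xs. G [A xs, B xs, C xs])"
  using comp_comp[of 3 G "[A, B, C]" n] by simp

lemma comp4: "rcomp 4 G \<Longrightarrow> rcomp n A \<Longrightarrow> rcomp n B \<Longrightarrow> rcomp n C \<Longrightarrow> rcomp n D \<Longrightarrow> rcomp n (\<lambda>xs. G [A xs, B xs, C xs, D xs])"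
  using comp_comp[of 4 G "[A, B, C, D]" n] by simp

lemma compP_if: "compP n C \<Longrightarrow> compP n P \<Longrightarrow> compP n Q \<Longrightarrow> compP n (\<lambda>xs. if C xs then P xs else Q xs)"
  by (rule comp_cong[OF comp_if[of n C "\<lambda>xs. ind (P xs)" "\<lambda>xs. ind (Q xs)"]]) auto

lemma comp_digit: "rcomp n A \<Longrightarrow> rcomp n B \<Longrightarrow> rcomp n C \<Longrightarrow> rcomp n (\<lambda>xs. digit (A xs) (B xs) (C xs))"
  unfolding digit_def by (intro comp_mod comp_div comp_pow)

lemma compP_mem: "rcomp n A \<Longrightarrow> rcomp n B \<Longrightarrow> compP n (\<lambda>xs. mem (A xs) (B xs))"
  unfolding mem_def by (intro compP_not compP_even comp_div comp_pow comp_const)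

lemma comp_Gc: "rcomp n A \<Longrightarrow> rcomp n B \<Longrightarrow> rcomp n (\<lambda>xs. Gc (A xs) (B xs))"
  unfolding Gc_def by (intro comp_add comp_mult comp_pow comp_const)

lemma comp_Rc: "rcomp n A \<Longrightarrow> rcomp n B \<Longrightarrow> rcomp n (\<lambda>xs. Rc (A xs) (B xs))"
  unfolding Rc_def by (intro comp_Gc comp_mult)

lemmas CR = comp_const comp_proj comp_nth_drop comp_add comp_mult comp_sub comp_div comp_mod comp_pow comp_suc
  comp_if compP_eq compP_le compP_less compP_not compP_conj compP_disj compP_imp compP_iff compP_bex compP_ball
  comp_sum comp_iter compP_if compP_even comp_fstd comp_sndd comp_nthc comp_lenc comp_ip comp_inn comp_digit
  compP_mem comp_Gc comp_Rc

lemma compP_inbC_raw: "compP 4 (\<lambda>ys. inbC d (ys!0) (ys!1) (ys!2) (ys!3))"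
  unfolding inbC_def
  apply (intro CR; (simp only: drop_drop)?)+
  apply simp_all?
  done

lemma compP_inbC: "rcomp n F \<Longrightarrow> rcomp n T \<Longrightarrow> rcomp n K \<Longrightarrow> rcomp n I \<Longrightarrow> compP n (\<lambda>xs. inbC d (F xs) (T xs) (K xs) (I xs))"
  using comp4[OF compP_inbC_raw[of d], of n F T K I] by simp

lemma compP_finC_raw: "compP 4 (\<lambda>ys. finC d (ys!0) (ys!1) (ys!2) (ys!3))"
  unfolding finC_def finG_def condk_def tgt_def shiftok_def shv_def
  apply (intro CR; (simp only: drop_drop)?)+
  apply simp_all?
  done

lemma compP_finC: "rcomp n A \<Longrightarrow> rcomp n F \<Longrightarrow> rcomp n T \<Longrightarrow> rcomp n P \<Longrightarrow> compP n (\<lambda>xs. finC d (A xs) (F xs) (T xs) (P xs))"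
  using comp4[OF compP_finC_raw[of d], of n A F T P] by simp

lemma compP_wfC_raw: "compP 1 (\<lambda>ys. wfC d (ys!0))"
  unfolding wfC_def
  apply (intro CR; (simp only: drop_drop)?)+
  apply simp_all?
  done

lemma tabN_rec: "tabN fin inb K N T n = rec_nat (\<Sum>P<Suc K ^ N. ind (fin P) * 2 ^ P)
   (\<lambda>m tb. \<Sum>P<Suc K ^ N. ind (stepP fin inb K N T m tb P) * 2 ^ P) n"
  by (induction n) simp_all

lemma compP_winC_raw: "compP 3 (\<lambda>ys. winC d (ys!0) (ys!1) (ys!2))"
  unfolding winC_def tabN_rec stepP_def
  apply (intro CR compP_finC compP_inbC; (simp only: drop_drop)?)+
  apply simp_all?
  done

lemma comp_dec: "rcomp 1 (\<lambda>ys. dec d (ys!0))"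
proof -
  have w: "compP 1 (\<lambda>ys. wfC d (fstd (sndd (ys!0))))"
    using comp1[OF compP_wfC_raw[of d], of 1 "\<lambda>ys. fstd (sndd (ys!0))"] by (simp add: CR)
  have v: "compP 1 (\<lambda>ys. winC d (fstd (ys!0)) (fstd (sndd (ys!0))) (sndd (sndd (ys!0))))"
    using comp3[OF compP_winC_raw[of d], of 1 "\<lambda>ys. fstd (ys!0)" "\<lambda>ys. fstd (sndd (ys!0))" "\<lambda>ys. sndd (sndd (ys!0))"]
    by (simp add: CR)
  show ?thesis unfolding dec_def by (rule compP_conj[OF w v])
qed


theorem theorem2:
  fixes d :: nat
  assumes "d \<ge> 1"
  shows "decidable (domino_problem d)"
proof -
  obtain f where f: "\<forall>xs. length xs = 1 \<longrightarrow> eval f xs (dec d (xs!0))"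
    using comp_dec[of d] unfolding rcomp_def by blast
  have d: "0 < d" using assms by simp
  show ?thesis unfolding decidable_def
  proof (intro exI[of _ f] allI)
    fix n
    have "eval f [n] (dec d ([n]!0))" using f[rule_format, of "[n]"] by simp
    then show "eval f [n] (if domino_problem d n then 1 else 0)" using dec_correct[OF d, of n] by simp
  qed
qed

end
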